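(* Let $\mathbf{k}=(k_1,\ldots,k_n)$ be an admissible index and $\alpha\in\mathbb{C}$ with $\mathrm{Re}\,\alpha>0$. Then for all $\beta\in\mathbb{C}$ with $|\beta-\alpha|<\mathrm{Re}\,\alpha$: (i) $\displaystyle Z(k_1,\ldots,k_n;\beta,\alpha)=\sum_{l=0}^{\infty}(\alpha-\beta)^l\sum_{i=0}^{l}\sum_{\substack{i_1+\cdots+i_{n-1}=i\\ i_j\in\mathbb{Z}_{\ge0}}}S_{l-i}(k_1,\{1\}^{i_1},k_2,\ldots,k_{n-1},\{1\}^{i_{n-1}},k_n;\alpha)$; (ii) $\displaystyle Z(k_1,\ldots,k_n;\alpha,\beta)=\sum_{l=0}^{\infty}(\alpha-\beta)^l\sum_{i=0}^{l}\sum_{\mathbf{i}^{(1)}_{k_1-1}+\cdots+\mathbf{i}^{(n)}_{k_n-2}=i}S_{l-i}\bigl(k_1+\mathbf{i}^{(1)}_{k_1-1},\ldots,k_{n-1}+\mathbf{i}^{(n-1)}_{k_{n-1}-1},k_n+\mathbf{i}^{(n)}_{k_n-2};\alpha\bigr)$.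
   Context: An index $(k_1,\ldots,k_n)$ is admissible if all $k_i$ are positive integers and $k_n\ge2$. For $a\in\mathbb{C}$, $(a)_0=1$ and $(a)_m=a(a+1)\cdots(a+m-1)$ for $m\ge1$. For an admissible index and $\mathrm{Re}\,\alpha>0$, $\beta\notin\mathbb{Z}_{\le0}$, \[ Z(k_1,\ldots,k_n;\alpha,\beta)=\sum_{0\le m_1<\cdots<m_n}\frac{(\alpha)_{m_1}}{m_1!}\frac{m_n!}{(\alpha)_{m_n+1}}\frac{1}{(m_1+\beta)^{k_1}\cdots(m_{n-1}+\beta)^{k_{n-1}}(m_n+\beta)^{k_n-1}}, \] $Z(\mathbf{k};\alpha):=Z(\mathbf{k};\alpha,\alpha)$, and $S_l(\mathbf{k};\alpha):=\sum_{l_1+\cdots+l_n=l,\ l_i\in\mathbb{Z}_{\ge0}}Z(k_1+l_1,\ldots,k_n+l_n;\alpha)$. $\{1\}^a$ denotes $a$ consecutive entries equal to $1$. For $m\ge1$, $r\ge0$ and nonnegative integers $i^{(m)}_1,\ldots,i^{(m)}_r$, $\mathbf{i}^{(m)}_r:=i^{(m)}_1+\cdots+i^{(m)}_r$ (equal to $0$ if $r=0$); the sum over $\mathbf{i}^{(1)}_{k_1-1}+\cdots+\mathbf{i}^{(n)}_{k_n-2}=i$ runs over all tuples of nonnegative integers $(i^{(1)}_1,\ldots,i^{(1)}_{k_1-1},\ldots,i^{(n-1)}_1,\ldots,i^{(n-1)}_{k_{n-1}-1},i^{(n)}_1,\ldots,i^{(n)}_{k_n-2})$ with total sum $i$. 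*)

theory Defs
  imports "HOL-Analysis.Analysis"
begin

definition admissible :: "nat list \<Rightarrow> bool" where
  "admissible k \<longleftrightarrow> k \<noteq> [] \<and> (\<forall>x\<in>set k. 0 < x) \<and> 2 \<le> last k"

definition Z_term :: "nat list \<Rightarrow> complex \<Rightarrow> complex \<Rightarrow> nat list \<Rightarrow> complex" where
  "Z_term k \<alpha> \<beta> m =
     pochhammer \<alpha> (m ! 0) / of_nat (fact (m ! 0))
     * (of_nat (fact (last m)) / pochhammer \<alpha> (last m + 1))
     * (\<Prod>j<length k - 1. 1 / (of_nat (m ! j) + \<beta>) ^ (k ! j))
     * (1 / (of_nat (last m) + \<beta>) ^ (last k - 1))"

definition incr_tuples :: "nat \<Rightarrow> nat list set" where
  "incr_tuples n = {m. length m = n \<and> sorted_wrt (<) m}"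

definition Z :: "nat list \<Rightarrow> complex \<Rightarrow> complex \<Rightarrow> complex" where
  "Z k \<alpha> \<beta> = infsum (Z_term k \<alpha> \<beta>) (incr_tuples (length k))"

definition comps :: "nat \<Rightarrow> nat \<Rightarrow> nat list set" where
  "comps r s = {l. length l = r \<and> sum_list l = s}"

definition S :: "nat \<Rightarrow> nat list \<Rightarrow> complex \<Rightarrow> complex" where
  "S l k \<alpha> = (\<Sum>ls\<in>comps (length k) l. Z (map2 (+) k ls) \<alpha> \<alpha>)"

text \<open>(k_1,{1}^{i_1},k_2,...,k_{n-1},{1}^{i_{n-1}},k_n) for is = (i_1,...,i_{n-1}).\<close>
definition insert_ones :: "nat list \<Rightarrow> nat list \<Rightarrow> nat list" where
  "insert_ones k is = concat (map2 (\<lambda>kj ij. kj # replicate ij 1) (butlast k) is) @ [last k]"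

definition tuple_families :: "nat list \<Rightarrow> nat \<Rightarrow> nat list list set" where
  "tuple_families k i = {ts. length ts = length k
      \<and> (\<forall>j<length k. length (ts ! j) = (if j = length k - 1 then k ! j - 2 else k ! j - 1))
      \<and> sum_list (map sum_list ts) = i}"

definition raise_index :: "nat list \<Rightarrow> nat list list \<Rightarrow> nat list" where
  "raise_index k ts = map2 (\<lambda>kj t. kj + sum_list t) k ts"

end

theory Submission
  imports Defs
begin


lemma geom_has_sum:
  fixes x z :: "'a :: {real_normed_field, banach}"
  assumes "norm x < norm z"
  shows "((\<lambda>d. x ^ d / z ^ Suc d) has_sum 1 / (z - x)) UNIV"
    and "(\<lambda>d. norm (x ^ d / z ^ Suc d)) summable_on UNIV"
proof -
  have z0: "z \<noteq> 0" using assms by auto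
  have nc: "norm (x / z) < 1" using assms z0 by (simp add: norm_divide divide_less_eq)
  have "(\<lambda>d. (x/z) ^ d) sums (1 / (1 - x/z))" by (rule geometric_sums[OF nc])
  hence "(\<lambda>d. (x/z) ^ d * (1/z)) sums (1 / (1 - x/z) * (1/z))" by (rule sums_mult2)
  moreover have "(\<lambda>d. (x/z) ^ d * (1/z)) = (\<lambda>d. x ^ d / z ^ Suc d)"
    by (auto simp: power_divide)
  moreover have "1 / (1 - x/z) * (1/z) = 1 / (z - x)"
    using z0 by (simp add: field_simps)
  ultimately have s: "(\<lambda>d. x ^ d / z ^ Suc d) sums (1 / (z - x))" by simp
  have ns: "summable (\<lambda>d. norm (x ^ d / z ^ Suc d))"
  proof -
    have e: "(\<lambda>d. norm (x/z) ^ d * (1 / norm z)) = (\<lambda>d. norm (x ^ d / z ^ Suc d))"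
      by (auto simp: norm_divide norm_power power_divide norm_mult)
    show ?thesis unfolding e[symmetric]
      by (intro summable_mult2 summable_geometric) (use nc in simp)
  qed
  show "((\<lambda>d. x ^ d / z ^ Suc d) has_sum 1 / (z - x)) UNIV"
    by (rule norm_summable_imp_has_sum[OF ns s])
  show "(\<lambda>d. norm (x ^ d / z ^ Suc d)) summable_on UNIV"
    using ns by (intro summable_nonneg_imp_summable_on) auto
qed

lemma prod_PiE_abs_summable:
  fixes f :: "'a \<Rightarrow> 'b \<Rightarrow> 'c :: {banach, real_normed_field}"
  assumes fin: "finite A" and ab: "\<And>x. x \<in> A \<Longrightarrow> (\<lambda>y. norm (f x y)) summable_on B x"
  shows "(\<lambda>g. norm (\<Prod>x\<in>A. f x (g x))) summable_on PiE A B"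
proof (cases "\<exists>x\<in>A. infsum (\<lambda>y. norm (f x y)) (B x) = 0")
  case True
  then obtain x where x: "x \<in> A" "infsum (\<lambda>y. norm (f x y)) (B x) = 0" by blast
  have "f x y = 0" if "y \<in> B x" for y
    using nonneg_infsum_le_0D[of "\<lambda>y. norm (f x y)" "B x" y] ab[OF x(1)] x(2) that by auto
  hence "(\<Prod>x\<in>A. f x (g x)) = 0" if "g \<in> PiE A B" for g
    using that x(1) fin by (intro prod_zero) (auto simp: PiE_def Pi_def)
  hence "(\<lambda>g. norm (\<Prod>x\<in>A. f x (g x))) summable_on PiE A B \<longleftrightarrow> (\<lambda>g. 0::real) summable_on PiE A B"
    by (intro summable_on_cong) auto
  thus ?thesis by simp
next
  case False
  have ab': "(\<lambda>y. norm (norm (f x y))) summable_on B x" if "x \<in> A" for x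
    using ab[OF that] by simp
  have eq: "infsum (\<lambda>g. \<Prod>x\<in>A. norm (f x (g x))) (PiE A B) = (\<Prod>x\<in>A. infsum (\<lambda>y. norm (f x y)) (B x))"
    by (rule infsum_prod_PiE_abs[OF fin ab'])
  have "(\<Prod>x\<in>A. infsum (\<lambda>y. norm (f x y)) (B x)) \<noteq> 0"
    using False fin by simp
  hence "(\<lambda>g. \<Prod>x\<in>A. norm (f x (g x))) summable_on PiE A B"
    using eq infsum_not_exists by fastforce
  thus ?thesis by (simp add: prod_norm)
qed

lemma has_sum_prod_PiE:
  fixes f :: "'a \<Rightarrow> 'b \<Rightarrow> 'c :: {banach, real_normed_field}"
  assumes fin: "finite A" and hs: "\<And>x. x \<in> A \<Longrightarrow> (f x has_sum s x) (B x)"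
    and ab: "\<And>x. x \<in> A \<Longrightarrow> (\<lambda>y. norm (f x y)) summable_on B x"
  shows "((\<lambda>g. \<Prod>x\<in>A. f x (g x)) has_sum (\<Prod>x\<in>A. s x)) (PiE A B)"
proof -
  have "(\<lambda>g. \<Prod>x\<in>A. f x (g x)) summable_on PiE A B"
    using prod_PiE_abs_summable[OF fin ab] by (rule abs_summable_summable)
  moreover have "infsum (\<lambda>g. \<Prod>x\<in>A. f x (g x)) (PiE A B) = (\<Prod>x\<in>A. infsum (f x) (B x))"
    by (rule infsum_prod_PiE_abs[OF fin ab])
  moreover have "(\<Prod>x\<in>A. infsum (f x) (B x)) = (\<Prod>x\<in>A. s x)"
    using hs by (intro prod.cong) (auto simp: has_sum_iff)
  ultimately show ?thesis by (simp add: has_sum_iff)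
qed


definition kap :: "nat list \<Rightarrow> nat \<Rightarrow> nat" where
  "kap k j = k ! j - (if j = length k - 1 then 1 else 0)"

definition Pf :: "'a::field_char_0 \<Rightarrow> nat list \<Rightarrow> 'a" where
  "Pf a m = of_nat (fact (last m)) / of_nat (fact (m ! 0)) / (\<Prod>t\<in>{m!0..last m}. of_nat t + a)"

lemma poch_split:
  fixes a :: "'a::comm_semiring_1"
  assumes "m0 \<le> L"
  shows "pochhammer a (Suc L) = pochhammer a m0 * (\<Prod>t\<in>{m0..L}. of_nat t + a)"
proof -
  have "pochhammer a (Suc L) = pochhammer a m0 * pochhammer (a + of_nat m0) (Suc L - m0)"
    using assms by (intro pochhammer_product) auto
  also have "pochhammer (a + of_nat m0) (Suc L - m0) = (\<Prod>i=0..<Suc L - m0. a + of_nat m0 + of_nat i)"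
    by (rule pochhammer_prod)
  also have "\<dots> = (\<Prod>i=0+m0..<(Suc L - m0)+m0. a + of_nat i)"
    by (subst prod.shift_bounds_nat_ivl) (simp add: add_ac)
  also have "\<dots> = (\<Prod>t\<in>{m0..L}. of_nat t + a)"
    using assms by (intro prod.cong) (auto simp: add_ac)
  finally show ?thesis .
qed

lemma Z_term_eq:
  assumes len: "length m = length k" and ne: "k \<noteq> []" and le: "m!0 \<le> last m"
    and p0: "pochhammer a (m!0) \<noteq> 0"
  shows "Z_term k a b m = Pf a m * (\<Prod>j<length k. 1 / (of_nat (m!j) + b) ^ kap k j)"
proof -
  define n where "n = length k"
  have n: "n = Suc (n - 1)" using ne n_def by (cases k) auto
  have "m \<noteq> []" using len ne by auto
  hence lm: "last m = m ! (n-1)" using len ne n_def by (simp add: last_conv_nth)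
  have lk: "last k = k ! (n-1)" using ne n_def by (simp add: last_conv_nth)
  have "(\<Prod>j<n. 1 / (of_nat (m!j) + b) ^ kap k j)
     = (\<Prod>j<Suc (n-1). 1 / (of_nat (m!j) + b) ^ kap k j)" using n by simp
  also have "\<dots> = (\<Prod>j<n-1. 1 / (of_nat (m!j) + b) ^ kap k j) * (1 / (of_nat (m!(n-1)) + b) ^ kap k (n-1))"
    by (simp add: lessThan_Suc mult.commute)
  also have "(\<Prod>j<n-1. 1 / (of_nat (m!j) + b) ^ kap k j) = (\<Prod>j<n-1. 1 / (of_nat (m!j) + b) ^ (k!j))"
    by (intro prod.cong) (auto simp: kap_def n_def)
  finally have pr: "(\<Prod>j<n. 1 / (of_nat (m!j) + b) ^ kap k j) =
     (\<Prod>j<n-1. 1 / (of_nat (m!j) + b) ^ (k!j)) * (1 / (of_nat (last m) + b) ^ (last k - 1))"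
    using lm lk by (simp add: kap_def n_def)
  have ps: "pochhammer a (last m + 1) = pochhammer a (m!0) * (\<Prod>t\<in>{m!0..last m}. of_nat t + a)"
    using poch_split[OF le] by simp
  show ?thesis
    unfolding Z_term_def n_def[symmetric] pr Pf_def ps using p0
    by (simp add: field_simps)
qed

lemma G1:
  fixes u v :: "nat \<Rightarrow> nat \<Rightarrow> 'c::{banach, real_normed_field}"
  assumes fO: "finite Os" and fG: "finite G" and disj: "Os \<inter> G = {}"
    and hu: "\<And>t. t \<in> Os \<Longrightarrow> (u t has_sum U t) UNIV"
    and nu: "\<And>t. t \<in> Os \<Longrightarrow> (\<lambda>d. norm (u t d)) summable_on UNIV"
    and hv: "\<And>t. t \<in> G \<Longrightarrow> (v t has_sum V t) UNIV"
    and nv: "\<And>t. t \<in> G \<Longrightarrow> (\<lambda>d. norm (v t d)) summable_on UNIV"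
  shows "((\<lambda>(P,d). (\<Prod>t\<in>Os. u t (d t)) * (\<Prod>t\<in>P. v t (d t))) has_sum
            ((\<Prod>t\<in>Os. U t) * (\<Prod>t\<in>G. 1 + V t))) (Sigma (Pow G) (\<lambda>P. PiE (Os \<union> P) (\<lambda>_. UNIV)))"
    and "(\<lambda>(P,d). norm ((\<Prod>t\<in>Os. u t (d t)) * (\<Prod>t\<in>P. v t (d t)))) summable_on
            (Sigma (Pow G) (\<lambda>P. PiE (Os \<union> P) (\<lambda>_. UNIV)))"
proof -
  define w where "w t = (if t \<in> Os then u t else v t)" for t
  define W where "W t = (if t \<in> Os then U t else V t)" for t
  define F where "F = (\<lambda>(P,d). (\<Prod>t\<in>Os. u t (d t)) * (\<Prod>t\<in>P. v t (d t)))"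
  have Feq: "F (P, d) = (\<Prod>t\<in>Os \<union> P. w t (d t))" if "P \<in> Pow G" for P d
  proof -
    have fP: "finite P" using that fG finite_subset by auto
    have dj: "Os \<inter> P = {}" using that disj by auto
    have "(\<Prod>t\<in>Os \<union> P. w t (d t)) = (\<Prod>t\<in>Os. w t (d t)) * (\<Prod>t\<in>P. w t (d t))"
      by (rule prod.union_disjoint[OF fO fP dj])
    also have "(\<Prod>t\<in>Os. w t (d t)) = (\<Prod>t\<in>Os. u t (d t))" by (intro prod.cong) (auto simp: w_def)
    also have "(\<Prod>t\<in>P. w t (d t)) = (\<Prod>t\<in>P. v t (d t))" using dj by (intro prod.cong) (auto simp: w_def)
    finally show ?thesis by (simp add: F_def)
  qed
  have inner: "((\<lambda>d. F (P, d)) has_sum ((\<Prod>t\<in>Os. U t) * (\<Prod>t\<in>P. V t))) (PiE (Os \<union> P) (\<lambda>_. UNIV))"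
    if P: "P \<in> Pow G" for P
  proof -
    have fP: "finite P" using P fG finite_subset by auto
    have dj: "Os \<inter> P = {}" using P disj by auto
    have "((\<lambda>d. \<Prod>t\<in>Os \<union> P. w t (d t)) has_sum (\<Prod>t\<in>Os \<union> P. W t)) (PiE (Os \<union> P) (\<lambda>_. UNIV))"
      using P by (intro has_sum_prod_PiE) (use fO fP hu hv nu nv in \<open>auto simp: w_def W_def\<close>)
    moreover have "(\<Prod>t\<in>Os \<union> P. W t) = (\<Prod>t\<in>Os. U t) * (\<Prod>t\<in>P. V t)"
      using dj by (subst prod.union_disjoint[OF fO fP dj]) (auto simp: W_def intro!: arg_cong2[where f="(*)"] prod.cong)
    ultimately show ?thesis using Feq[OF P] by simp
  qed
  have innern: "(\<lambda>d. norm (F (P, d))) summable_on (PiE (Os \<union> P) (\<lambda>_. UNIV))"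
    if P: "P \<in> Pow G" for P
  proof -
    have fP: "finite P" using P fG finite_subset by auto
    have "(\<lambda>d. norm (\<Prod>t\<in>Os \<union> P. w t (d t))) summable_on (PiE (Os \<union> P) (\<lambda>_. UNIV))"
      using P by (intro prod_PiE_abs_summable) (use fO fP nu nv in \<open>auto simp: w_def\<close>)
    thus ?thesis using Feq[OF P] by simp
  qed
  have ns: "(\<lambda>x. norm (F x)) summable_on (Sigma (Pow G) (\<lambda>P. PiE (Os \<union> P) (\<lambda>_. UNIV)))"
  proof -
    have "(\<lambda>(P,d). norm (F (P,d))) summable_on (Sigma (Pow G) (\<lambda>P. PiE (Os \<union> P) (\<lambda>_. UNIV)))"
      by (rule summable_on_SigmaI[where g="\<lambda>P. infsum (\<lambda>d. norm (F (P, d))) (PiE (Os \<union> P) (\<lambda>_. UNIV))"])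
         (use innern fG in auto)
    thus ?thesis by (simp add: case_prod_unfold)
  qed
  thus "(\<lambda>(P,d). norm ((\<Prod>t\<in>Os. u t (d t)) * (\<Prod>t\<in>P. v t (d t)))) summable_on
            (Sigma (Pow G) (\<lambda>P. PiE (Os \<union> P) (\<lambda>_. UNIV)))"
    by (simp add: F_def case_prod_unfold)
  have sF: "F summable_on (Sigma (Pow G) (\<lambda>P. PiE (Os \<union> P) (\<lambda>_. UNIV)))"
    using ns by (rule abs_summable_summable)
  have outer: "((\<lambda>P. (\<Prod>t\<in>Os. U t) * (\<Prod>t\<in>P. V t)) has_sum ((\<Prod>t\<in>Os. U t) * (\<Prod>t\<in>G. 1 + V t))) (Pow G)"
  proof -
    have "(\<Prod>t\<in>G. V t + 1) = (\<Sum>X\<in>Pow G. (\<Prod>t\<in>X. V t) * (\<Prod>t\<in>G - X. 1))"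
      by (rule prod_add[OF fG])
    hence "(\<Prod>t\<in>G. 1 + V t) = (\<Sum>X\<in>Pow G. (\<Prod>t\<in>X. V t))" by (simp add: add.commute)
    hence "(\<Prod>t\<in>Os. U t) * (\<Prod>t\<in>G. 1 + V t) = (\<Sum>P\<in>Pow G. (\<Prod>t\<in>Os. U t) * (\<Prod>t\<in>P. V t))"
      by (simp add: sum_distrib_left)
    thus ?thesis using fG by (intro has_sum_finiteI) auto
  qed
  have "(F has_sum ((\<Prod>t\<in>Os. U t) * (\<Prod>t\<in>G. 1 + V t))) (Sigma (Pow G) (\<lambda>P. PiE (Os \<union> P) (\<lambda>_. UNIV)))"
    by (rule has_sum_SigmaI[OF inner outer sF])
  thus "((\<lambda>(P,d). (\<Prod>t\<in>Os. u t (d t)) * (\<Prod>t\<in>P. v t (d t))) has_sum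
            ((\<Prod>t\<in>Os. U t) * (\<Prod>t\<in>G. 1 + V t))) (Sigma (Pow G) (\<lambda>P. PiE (Os \<union> P) (\<lambda>_. UNIV)))"
    by (simp add: F_def)
qed

lemma poch_nz:
  fixes a :: complex
  assumes "0 < Re a" shows "pochhammer a n \<noteq> 0"
  using assms by (auto simp: pochhammer_eq_0_iff)

lemma incr_facts:
  assumes "m \<in> incr_tuples n" "0 < n"
  shows "length m = n" "m \<noteq> []" "m!0 \<le> last m" "sorted_wrt (<) m" "last m = m ! (n - 1)"
proof -
  show ln: "length m = n" "sorted_wrt (<) m" using assms by (auto simp: incr_tuples_def)
  thus ne: "m \<noteq> []" using assms by auto
  show "last m = m ! (n - 1)" using ne ln by (simp add: last_conv_nth)
  moreover have "m!0 \<le> m!(n-1)"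
    using ln assms by (intro sorted_nth_mono) (auto simp: strict_sorted_iff)
  ultimately show "m!0 \<le> last m" by simp
qed

lemma Pf_pos:
  fixes g :: real assumes "0 < g" shows "0 < Pf g m"
  using assms unfolding Pf_def by (intro divide_pos_pos prod_pos) auto

lemma Pf_norm:
  fixes a :: complex assumes "0 < Re a"
  shows "norm (Pf a m) \<le> Pf (Re a) m"
proof -
  have "norm (Pf a m) = real (fact (last m)) / real (fact (m!0)) / (\<Prod>t\<in>{m!0..last m}. norm (of_nat t + a))"
    unfolding Pf_def by (simp add: norm_divide prod_norm norm_mult)
  also have "\<dots> \<le> real (fact (last m)) / real (fact (m!0)) / (\<Prod>t\<in>{m!0..last m}. of_nat t + Re a)"
  proof (intro divide_left_mono prod_mono conjI mult_pos_pos prod_pos)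
    fix t assume "t \<in> {m!0..last m}"
    show "0 \<le> real t + Re a" using assms by simp
    have "Re (of_nat t + a) \<le> norm (of_nat t + a)" by (rule complex_Re_le_cmod)
    thus "real t + Re a \<le> norm (of_nat t + a)" by simp
  next
    fix t show "0 < real t + Re a" using assms by simp
  qed (use assms in \<open>auto simp: complex_eq_iff\<close>)
  also have "\<dots> = Pf (Re a) m" unfolding Pf_def by simp
  finally show ?thesis .
qed

lemma Pf_anti:
  fixes a g :: real assumes "0 < g" "g \<le> a"
  shows "Pf a m \<le> Pf g m"
  unfolding Pf_def using assms
  by (intro divide_left_mono prod_mono conjI mult_pos_pos prod_pos) auto

definition realZ :: "nat list \<Rightarrow> real \<Rightarrow> nat list \<Rightarrow> real" where
  "realZ k g m = Pf g m * (\<Prod>j<length k. 1 / (of_nat (m!j) + g) ^ kap k j)"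

lemma realZ_nonneg: "0 < g \<Longrightarrow> 0 \<le> realZ k g m"
  unfolding realZ_def using Pf_pos[of g m] by (intro mult_nonneg_nonneg prod_nonneg) auto

definition S2 :: "nat list \<Rightarrow> (nat \<times> nat) set" where
  "S2 k = Sigma {..<length k} (\<lambda>j. {..<kap k j})"

lemma finite_S2[simp]: "finite (S2 k)" unfolding S2_def by auto

definition F2 :: "nat list \<Rightarrow> complex \<Rightarrow> complex \<Rightarrow> nat list \<Rightarrow> (nat \<times> nat \<Rightarrow> nat) \<Rightarrow> complex" where
  "F2 k \<alpha> \<beta> m c = Pf \<alpha> m * (\<Prod>(j,p)\<in>S2 k. (\<alpha> - \<beta>) ^ c (j,p) / (of_nat (m!j) + \<alpha>) ^ Suc (c (j,p)))"

lemma z_bound: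
  fixes \<alpha> \<beta> :: complex
  assumes "0 < Re \<alpha>" "cmod (\<beta> - \<alpha>) < Re \<alpha>"
  shows "real t + (Re \<alpha> - cmod (\<alpha> - \<beta>)) \<le> cmod (of_nat t + \<alpha>) - cmod (\<alpha> - \<beta>)"
    and "cmod (\<alpha> - \<beta>) < cmod (of_nat t + \<alpha>)"
    and "0 < Re \<alpha> - cmod (\<alpha> - \<beta>)"
proof -
  have "Re (of_nat t + \<alpha>) \<le> cmod (of_nat t + \<alpha>)" by (rule complex_Re_le_cmod)
  hence r: "real t + Re \<alpha> \<le> cmod (of_nat t + \<alpha>)" by simp
  have e: "cmod (\<alpha> - \<beta>) = cmod (\<beta> - \<alpha>)" by (simp add: norm_minus_commute)
  show "real t + (Re \<alpha> - cmod (\<alpha> - \<beta>)) \<le> cmod (of_nat t + \<alpha>) - cmod (\<alpha> - \<beta>)" using r by simp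
  show "cmod (\<alpha> - \<beta>) < cmod (of_nat t + \<alpha>)" using r e assms by simp
  show "0 < Re \<alpha> - cmod (\<alpha> - \<beta>)" using e assms by simp
qed

lemma perm2:
  fixes \<alpha> \<beta> :: complex
  assumes adm: "admissible k" and ra: "0 < Re \<alpha>" and rb: "cmod (\<beta> - \<alpha>) < Re \<alpha>"
    and m: "m \<in> incr_tuples (length k)"
  shows "((\<lambda>c. F2 k \<alpha> \<beta> m c) has_sum Z_term k \<alpha> \<beta> m) (PiE (S2 k) (\<lambda>_. UNIV))"
    and "(\<lambda>c. norm (F2 k \<alpha> \<beta> m c)) summable_on (PiE (S2 k) (\<lambda>_. UNIV))"
    and "infsum (\<lambda>c. norm (F2 k \<alpha> \<beta> m c)) (PiE (S2 k) (\<lambda>_. UNIV)) \<le> realZ k (Re \<alpha> - cmod (\<alpha> - \<beta>)) m"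
proof -
  define x where "x = \<alpha> - \<beta>"
  define g where "g = Re \<alpha> - cmod x"
  define n where "n = length k"
  have kne: "k \<noteq> []" using adm by (auto simp: admissible_def)
  hence n0: "0 < n" by (simp add: n_def)
  note mf = incr_facts[OF m[folded n_def] n0]
  have zb: "cmod x < cmod (of_nat t + \<alpha>)" for t using z_bound(2)[OF ra rb] by (simp add: x_def)
  have g0: "0 < g" using z_bound(3)[OF ra rb] by (simp add: x_def g_def)
  have zb2: "real t + g \<le> cmod (of_nat t + \<alpha>) - cmod x" for t using z_bound(1)[OF ra rb] by (simp add: x_def g_def)
  have hp: "((\<lambda>c. \<Prod>(j,p)\<in>S2 k. x ^ c (j,p) / (of_nat (m!j) + \<alpha>) ^ Suc (c (j,p))) has_sum
             (\<Prod>(j,p)\<in>S2 k. 1 / (of_nat (m!j) + \<alpha> - x))) (PiE (S2 k) (\<lambda>_. UNIV))"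
  proof -
    have h1: "((\<lambda>d. x ^ d / (of_nat (m!fst jp) + \<alpha>) ^ Suc d) has_sum
               1 / (of_nat (m!fst jp) + \<alpha> - x)) UNIV" for jp
      using geom_has_sum(1)[of x "of_nat (m!fst jp) + \<alpha>"] zb by simp
    have h2: "(\<lambda>d. norm (x ^ d / (of_nat (m!fst jp) + \<alpha>) ^ Suc d)) summable_on UNIV" for jp
      using geom_has_sum(2)[of x "of_nat (m!fst jp) + \<alpha>"] zb by simp
    show ?thesis
      using has_sum_prod_PiE[OF finite_S2 h1 h2] by (simp add: case_prod_unfold)
  qed
  have "(\<Prod>(j,p)\<in>S2 k. 1 / (of_nat (m!j) + \<alpha> - x)) = (\<Prod>j<n. \<Prod>p<kap k j. 1 / (of_nat (m!j) + \<beta>))"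
    unfolding S2_def n_def by (subst prod.Sigma) (auto simp: x_def)
  also have "\<dots> = (\<Prod>j<n. 1 / (of_nat (m!j) + \<beta>) ^ kap k j)" by (simp add: power_one_over)
  finally have pv: "(\<Prod>(j,p)\<in>S2 k. 1 / (of_nat (m!j) + \<alpha> - x)) = (\<Prod>j<n. 1 / (of_nat (m!j) + \<beta>) ^ kap k j)" .
  have zt: "Z_term k \<alpha> \<beta> m = Pf \<alpha> m * (\<Prod>j<n. 1 / (of_nat (m!j) + \<beta>) ^ kap k j)"
    unfolding n_def by (rule Z_term_eq) (use mf kne poch_nz[OF ra] n_def in auto)
  show "((\<lambda>c. F2 k \<alpha> \<beta> m c) has_sum Z_term k \<alpha> \<beta> m) (PiE (S2 k) (\<lambda>_. UNIV))"
    unfolding F2_def zt x_def[symmetric] pv[symmetric] by (rule has_sum_cmult_right[OF hp])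
  have nF: "norm (F2 k \<alpha> \<beta> m c) = norm (Pf \<alpha> m) *
      (\<Prod>(j,p)\<in>S2 k. cmod x ^ c (j,p) / cmod (of_nat (m!j) + \<alpha>) ^ Suc (c (j,p)))" for c
    unfolding F2_def x_def[symmetric] norm_mult prod_norm[symmetric] case_prod_unfold
    by (intro arg_cong2[where f="(*)"] refl prod.cong) (simp_all add: norm_divide norm_power norm_mult)
  have hpn: "((\<lambda>c. \<Prod>(j,p)\<in>S2 k. cmod x ^ c (j,p) / cmod (of_nat (m!j) + \<alpha>) ^ Suc (c (j,p))) has_sum
             (\<Prod>(j,p)\<in>S2 k. 1 / (cmod (of_nat (m!j) + \<alpha>) - cmod x))) (PiE (S2 k) (\<lambda>_. UNIV))"
  proof -
    have h1: "((\<lambda>d. cmod x ^ d / cmod (of_nat (m!fst jp) + \<alpha>) ^ Suc d) has_sum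
               1 / (cmod (of_nat (m!fst jp) + \<alpha>) - cmod x)) UNIV" for jp
      using geom_has_sum(1)[of "cmod x" "cmod (of_nat (m!fst jp) + \<alpha>)"] zb by simp
    have h2: "(\<lambda>d. norm (cmod x ^ d / cmod (of_nat (m!fst jp) + \<alpha>) ^ Suc d)) summable_on UNIV" for jp
      using geom_has_sum(2)[of "cmod x" "cmod (of_nat (m!fst jp) + \<alpha>)"] zb by simp
    show ?thesis
      using has_sum_prod_PiE[OF finite_S2 h1 h2] by (simp add: case_prod_unfold)
  qed
  have hn: "((\<lambda>c. norm (F2 k \<alpha> \<beta> m c)) has_sum
       norm (Pf \<alpha> m) * (\<Prod>(j,p)\<in>S2 k. 1 / (cmod (of_nat (m!j) + \<alpha>) - cmod x))) (PiE (S2 k) (\<lambda>_. UNIV))"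
    unfolding nF by (rule has_sum_cmult_right[OF hpn])
  thus "(\<lambda>c. norm (F2 k \<alpha> \<beta> m c)) summable_on (PiE (S2 k) (\<lambda>_. UNIV))" by (rule has_sum_imp_summable)
  have "infsum (\<lambda>c. norm (F2 k \<alpha> \<beta> m c)) (PiE (S2 k) (\<lambda>_. UNIV)) =
     norm (Pf \<alpha> m) * (\<Prod>(j,p)\<in>S2 k. 1 / (cmod (of_nat (m!j) + \<alpha>) - cmod x))"
    using hn by (simp add: has_sum_iff)
  also have "\<dots> \<le> Pf g m * (\<Prod>(j,p)\<in>S2 k. 1 / (of_nat (m!j) + g))"
  proof (intro mult_mono prod_mono conjI)
    show "norm (Pf \<alpha> m) \<le> Pf g m"
      using Pf_norm[OF ra, of m] Pf_anti[OF g0, of "Re \<alpha>" m] by (simp add: g_def)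
  next
    fix jp assume "jp \<in> S2 k"
    obtain j p where jp: "jp = (j,p)" by fastforce
    have p1: "0 < real (m!j) + g" using g0 by simp
    have "real (m!j) + g \<le> cmod (of_nat (m!j) + \<alpha>) - cmod x" by (rule zb2)
    thus "0 \<le> (case jp of (j,p) \<Rightarrow> 1 / (cmod (of_nat (m!j) + \<alpha>) - cmod x))"
      and "(case jp of (j,p) \<Rightarrow> 1 / (cmod (of_nat (m!j) + \<alpha>) - cmod x)) \<le> (case jp of (j,p) \<Rightarrow> 1 / (real (m!j) + g))"
      using p1 unfolding jp by (auto intro!: divide_left_mono)
  next
    show "0 \<le> Pf g m" by (rule less_imp_le[OF Pf_pos[OF g0]])
  next
    show "0 \<le> (\<Prod>(j,p)\<in>S2 k. 1 / (cmod (of_nat (m!j) + \<alpha>) - cmod x))"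
      using zb by (intro prod_nonneg) (auto simp: case_prod_unfold less_imp_le)
  qed
  also have "(\<Prod>(j,p)\<in>S2 k. 1 / (real (m!j) + g)) = (\<Prod>j<n. 1 / (real (m!j) + g) ^ kap k j)"
    unfolding S2_def n_def by (subst prod.Sigma[symmetric]) (auto simp: power_one_over)
  finally show "infsum (\<lambda>c. norm (F2 k \<alpha> \<beta> m c)) (PiE (S2 k) (\<lambda>_. UNIV)) \<le> realZ k (Re \<alpha> - cmod (\<alpha> - \<beta>)) m"
    unfolding realZ_def g_def x_def n_def by simp
qed


lemma ssorted_le:
  fixes xs :: "nat list"
  assumes "sorted_wrt (<) xs" "i \<le> j" "j < length xs"
  shows "xs!i \<le> xs!j"
  using assms by (cases "i = j") (auto simp: sorted_wrt_iff_nth_less intro: less_imp_le)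

lemma ssorted_less_iff:
  fixes xs :: "nat list"
  assumes "sorted_wrt (<) xs" "i < length xs" "j < length xs"
  shows "xs!i < xs!j \<longleftrightarrow> i < j"
proof
  assume h: "xs!i < xs!j"
  show "i < j"
  proof (rule ccontr)
    assume "\<not> i < j" hence "xs!j \<le> xs!i" using assms by (intro ssorted_le) auto
    thus False using h by simp
  qed
qed (use assms in \<open>auto simp: sorted_wrt_iff_nth_less\<close>)

lemma ssorted_eq_iff:
  fixes xs :: "nat list"
  assumes "sorted_wrt (<) xs" "i < length xs" "j < length xs"
  shows "xs!i = xs!j \<longleftrightarrow> i = j"
  using ssorted_less_iff[OF assms] ssorted_less_iff[OF assms(1,3,2)] by (metis less_irrefl linorder_neqE_nat)

lemma card_less_nth:
  fixes xs :: "nat list"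
  assumes "sorted_wrt (<) xs" "q < length xs"
  shows "card {u \<in> set xs. u < xs!q} = q"
proof -
  have "{u \<in> set xs. u < xs!q} = (\<lambda>i. xs!i) ` {..<q}"
  proof (intro equalityI subsetI)
    fix u assume "u \<in> {u \<in> set xs. u < xs!q}"
    then obtain i where i: "i < length xs" "u = xs!i" "xs!i < xs!q" by (auto simp: in_set_conv_nth)
    have "i < q"
    proof (rule ccontr)
      assume "\<not> i < q"
      hence "q \<le> i" by simp
      hence "xs!q \<le> xs!i" using assms i by (intro ssorted_le) auto
      thus False using i by simp
    qed
    thus "u \<in> (\<lambda>i. xs!i) ` {..<q}" using i by auto
  next
    fix u assume "u \<in> (\<lambda>i. xs!i) ` {..<q}"
    then obtain i where "i < q" "u = xs!i" by auto
    thus "u \<in> {u \<in> set xs. u < xs!q}" using assms by (auto simp: sorted_wrt_iff_nth_less)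
  qed
  moreover have "inj_on (\<lambda>i. xs!i) {..<q}"
    using assms by (intro inj_onI) (auto simp: strict_sorted_iff nth_eq_iff_index_eq)
  ultimately show ?thesis by (simp add: card_image)
qed

definition idx :: "nat list \<Rightarrow> nat \<Rightarrow> nat" where
  "idx m t = card {u \<in> set m. u < t}"

definition Gp :: "nat list \<Rightarrow> nat set" where
  "Gp m = {m!0..last m} - set m"

lemma finite_Gp[simp]: "finite (Gp m)" unfolding Gp_def by auto

lemma set_sub_interval:
  fixes m :: "nat list"
  assumes "sorted_wrt (<) m" "m \<noteq> []"
  shows "set m \<subseteq> {m!0..last m}"
proof
  fix t assume "t \<in> set m"
  then obtain i where i: "i < length m" "t = m!i" by (auto simp: in_set_conv_nth)
  have "m!0 \<le> m!i" "m!i \<le> m!(length m - 1)" using assms i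
    by (auto intro!: ssorted_le)
  thus "t \<in> {m!0..last m}" using i assms by (auto simp: last_conv_nth)
qed

lemma val_eq:
  fixes Zf :: "nat \<Rightarrow> 'a::field" and x C :: 'a
  assumes sub: "Os \<subseteq> I" and fI: "finite I"
    and nz: "\<And>t. t \<in> I \<Longrightarrow> Zf t \<noteq> 0" and nz2: "\<And>t. t \<in> I \<Longrightarrow> Zf t - x \<noteq> 0"
    and K1: "\<And>t. t \<in> Os \<Longrightarrow> 1 \<le> K t"
  shows "C / (\<Prod>t\<in>I. Zf t) * ((\<Prod>t\<in>Os. 1/(Zf t - x) * (1 / Zf t ^ (K t - 1))) * (\<Prod>t\<in>I - Os. 1 + x/(Zf t - x)))
       = C / (\<Prod>t\<in>I. Zf t - x) * (\<Prod>t\<in>Os. 1 / Zf t ^ K t)"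
proof -
  have e1: "(\<Prod>t\<in>Os. 1/(Zf t - x) * (1 / Zf t ^ (K t - 1))) = (\<Prod>t\<in>Os. Zf t / (Zf t - x)) * (\<Prod>t\<in>Os. 1 / Zf t ^ K t)"
    unfolding prod.distrib[symmetric]
  proof (intro prod.cong refl)
    fix t assume t: "t \<in> Os"
    have K: "K t = Suc (K t - 1)" using K1[OF t] by simp
    show "1/(Zf t - x) * (1 / Zf t ^ (K t - 1)) = Zf t / (Zf t - x) * (1 / Zf t ^ K t)"
      using nz[of t] nz2[of t] t sub by (subst (2) K) (auto simp: field_simps)
  qed
  have e2: "(\<Prod>t\<in>I - Os. 1 + x/(Zf t - x)) = (\<Prod>t\<in>I - Os. Zf t / (Zf t - x))"
    using nz2 by (intro prod.cong) (auto simp: field_simps)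
  have e3: "(\<Prod>t\<in>I. Zf t / (Zf t - x)) = (\<Prod>t\<in>I - Os. Zf t / (Zf t - x)) * (\<Prod>t\<in>Os. Zf t / (Zf t - x))"
    by (rule prod.subset_diff[OF sub fI])
  have e4: "(\<Prod>t\<in>I. Zf t / (Zf t - x)) = (\<Prod>t\<in>I. Zf t) / (\<Prod>t\<in>I. Zf t - x)"
    by (rule prod_dividef)
  have p0: "(\<Prod>t\<in>I. Zf t) \<noteq> 0" using nz fI by simp
  have e5: "(\<Prod>t\<in>Os. Zf t / (Zf t - x)) * (\<Prod>t\<in>I - Os. Zf t / (Zf t - x)) = (\<Prod>t\<in>I. Zf t) / (\<Prod>t\<in>I. Zf t - x)"
    using e3 e4 by (simp add: mult.commute)
  have "C / (\<Prod>t\<in>I. Zf t) * ((\<Prod>t\<in>Os. 1/(Zf t - x) * (1 / Zf t ^ (K t - 1))) * (\<Prod>t\<in>I - Os. 1 + x/(Zf t - x)))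
     = C / (\<Prod>t\<in>I. Zf t) * ((\<Prod>t\<in>Os. 1 / Zf t ^ K t) * ((\<Prod>t\<in>Os. Zf t / (Zf t - x)) * (\<Prod>t\<in>I - Os. Zf t / (Zf t - x))))"
    unfolding e1 e2 by (simp add: ac_simps)
  also have "\<dots> = C / (\<Prod>t\<in>I. Zf t) * ((\<Prod>t\<in>Os. 1 / Zf t ^ K t) * ((\<Prod>t\<in>I. Zf t) / (\<Prod>t\<in>I. Zf t - x)))"
    unfolding e5 ..
  also have "\<dots> = C / (\<Prod>t\<in>I. Zf t - x) * (\<Prod>t\<in>Os. 1 / Zf t ^ K t)"
    using p0 by (simp add: field_simps)
  finally show ?thesis .
qed

lemma kap_pos:
  assumes "admissible k" "j < length k" shows "1 \<le> kap k j"
proof (cases "j = length k - 1")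
  case True
  hence "k ! j = last k" using assms by (simp add: admissible_def last_conv_nth)
  thus ?thesis using assms True by (auto simp: admissible_def kap_def)
next
  case False
  have "k ! j \<in> set k" using assms by simp
  hence "0 < k ! j" using assms by (auto simp: admissible_def)
  thus ?thesis using False by (simp add: kap_def)
qed

lemma idx_nth:
  fixes m :: "nat list"
  assumes "sorted_wrt (<) m" "j < length m" shows "idx m (m!j) = j"
  unfolding idx_def using card_less_nth[OF assms] .

lemma prod_set_nth:
  fixes m :: "nat list" and f :: "nat \<Rightarrow> 'a::comm_monoid_mult"
  assumes "sorted_wrt (<) m"
  shows "(\<Prod>t\<in>set m. f t) = (\<Prod>j<length m. f (m!j))"
proof -
  have inj: "inj_on (\<lambda>j. m!j) {..<length m}"
    using assms by (intro inj_onI) (auto simp: ssorted_eq_iff)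
  have im: "(\<lambda>j. m!j) ` {..<length m} = set m" by (auto simp: in_set_conv_nth)
  show ?thesis using prod.reindex[OF inj, of f] im by simp
qed

definition fib1 :: "nat list \<Rightarrow> (nat set \<times> (nat \<Rightarrow> nat)) set" where
  "fib1 m = Sigma (Pow (Gp m)) (\<lambda>P. PiE (set m \<union> P) (\<lambda>_. UNIV))"

definition F1 :: "nat list \<Rightarrow> complex \<Rightarrow> complex \<Rightarrow> nat list \<Rightarrow> nat set \<times> (nat \<Rightarrow> nat) \<Rightarrow> complex" where
  "F1 k \<alpha> \<beta> m = (\<lambda>(P,d). Pf \<alpha> m * ((\<Prod>t\<in>set m. (\<alpha>-\<beta>) ^ d t / (of_nat t + \<alpha>) ^ (kap k (idx m t) + d t))
      * (\<Prod>t\<in>P. (\<alpha>-\<beta>) ^ Suc (d t) / (of_nat t + \<alpha>) ^ Suc (d t))))"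

lemma perm1:
  fixes \<alpha> \<beta> :: complex
  assumes adm: "admissible k" and ra: "0 < Re \<alpha>" and rb: "cmod (\<beta> - \<alpha>) < Re \<alpha>"
    and m: "m \<in> incr_tuples (length k)"
  shows "(F1 k \<alpha> \<beta> m has_sum Z_term k \<beta> \<alpha> m) (fib1 m)"
    and "(\<lambda>y. norm (F1 k \<alpha> \<beta> m y)) summable_on (fib1 m)"
    and "infsum (\<lambda>y. norm (F1 k \<alpha> \<beta> m y)) (fib1 m) \<le> realZ k (Re \<alpha> - cmod (\<alpha> - \<beta>)) m"
proof -
  define x where "x = \<alpha> - \<beta>"
  define g where "g = Re \<alpha> - cmod x"
  define n where "n = length k"
  define z where "z t = of_nat t + \<alpha>" for t :: nat
  define K where "K t = kap k (idx m t)" for t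
  define I where "I = {m!0..last m}"
  define C where "C = real (fact (last m)) / real (fact (m!0))"
  have kne: "k \<noteq> []" using adm by (auto simp: admissible_def)
  hence n0: "0 < n" by (simp add: n_def)
  note mf = incr_facts[OF m[folded n_def] n0]
  have zb: "cmod x < cmod (z t)" for t using z_bound(2)[OF ra rb] by (simp add: x_def z_def)
  have g0: "0 < g" using z_bound(3)[OF ra rb] by (simp add: x_def g_def)
  have zb2: "real t + g \<le> cmod (z t) - cmod x" for t using z_bound(1)[OF ra rb] by (simp add: x_def g_def z_def)
  have z0: "z t \<noteq> 0" for t using zb[of t] by auto
  have zx0: "z t - x \<noteq> 0" for t
  proof
    assume "z t - x = 0" hence "z t = x" by simp
    thus False using zb[of t] by simp
  qed
  have nz0: "cmod (z t) \<noteq> 0" for t using z0 by simp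
  have nzx0: "cmod (z t) - cmod x \<noteq> 0" for t using zb[of t] by simp
  have K1: "1 \<le> K t" if tm: "t \<in> set m" for t
  proof -
    obtain j where j: "j < length m" "t = m!j" using tm by (auto simp: in_set_conv_nth)
    have "K t = kap k j" unfolding K_def j(2) using idx_nth[OF mf(4) j(1)] by simp
    thus ?thesis using kap_pos[OF adm, of j] j mf(1) n_def by simp
  qed
  have disj: "set m \<inter> Gp m = {}" by (auto simp: Gp_def)
  have sub: "set m \<subseteq> I" unfolding I_def by (rule set_sub_interval[OF mf(4) mf(2)])
  have IG: "I - set m = Gp m" by (simp add: Gp_def I_def)
  have fI: "finite I" by (simp add: I_def)
  define u where "u t d = x ^ d / z t ^ Suc d * (1 / z t ^ (K t - 1))" for t d
  define U where "U t = 1 / (z t - x) * (1 / z t ^ (K t - 1))" for t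
  define v where "v t d = x * (x ^ d / z t ^ Suc d)" for t d
  define V where "V t = x * (1 / (z t - x))" for t
  have Feq: "F1 k \<alpha> \<beta> m (P,d) = Pf \<alpha> m * ((\<Prod>t\<in>set m. u t (d t)) * (\<Prod>t\<in>P. v t (d t)))" for P d
  proof -
    have "(\<Prod>t\<in>set m. x ^ d t / z t ^ (K t + d t)) = (\<Prod>t\<in>set m. u t (d t))"
    proof (intro prod.cong refl)
      fix t assume t: "t \<in> set m"
      have e: "K t + d t = Suc (d t) + (K t - 1)" using K1[OF t] by simp
      have "z t ^ (K t + d t) = z t ^ Suc (d t) * z t ^ (K t - 1)"
        unfolding e by (rule power_add)
      thus "x ^ d t / z t ^ (K t + d t) = u t (d t)" by (simp add: u_def)
    qed
    moreover have "(\<Prod>t\<in>P. x ^ Suc (d t) / z t ^ Suc (d t)) = (\<Prod>t\<in>P. v t (d t))"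
      by (intro prod.cong) (auto simp: v_def)
    ultimately show ?thesis by (simp add: F1_def x_def[symmetric] z_def[symmetric] K_def[symmetric])
  qed
  have gs: "((\<lambda>d. x ^ d / z t ^ Suc d) has_sum 1 / (z t - x)) UNIV" for t
    using geom_has_sum(1)[of x "z t"] zb by simp
  have gn: "(\<lambda>d. norm (x ^ d / z t ^ Suc d)) summable_on UNIV" for t
    using geom_has_sum(2)[of x "z t"] zb by simp
  have hu: "(u t has_sum U t) UNIV" for t
    unfolding u_def U_def by (rule has_sum_cmult_left[OF gs])
  have nu: "(\<lambda>d. norm (u t d)) summable_on UNIV" for t
    unfolding u_def norm_mult by (rule summable_on_cmult_left[OF gn])
  have hv: "(v t has_sum V t) UNIV" for t
    unfolding v_def V_def by (rule has_sum_cmult_right[OF gs])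
  have nv: "(\<lambda>d. norm (v t d)) summable_on UNIV" for t
    unfolding v_def norm_mult by (rule summable_on_cmult_right[OF gn])
  note G = G1[of "set m" "Gp m" u U v V, OF finite_set finite_Gp disj hu nu hv nv]
  have val: "Pf \<alpha> m * ((\<Prod>t\<in>set m. U t) * (\<Prod>t\<in>Gp m. 1 + V t)) = Z_term k \<beta> \<alpha> m"
  proof -
    have pa: "Pf \<alpha> m = of_real C / (\<Prod>t\<in>I. z t)" by (simp add: Pf_def C_def I_def z_def)
    have "Pf \<alpha> m * ((\<Prod>t\<in>set m. U t) * (\<Prod>t\<in>Gp m. 1 + V t))
       = of_real C / (\<Prod>t\<in>I. z t - x) * (\<Prod>t\<in>set m. 1 / z t ^ K t)"
      unfolding pa IG[symmetric] U_def V_def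
      using val_eq[where C="of_real C", OF sub fI z0 zx0 K1] by simp
    also have "of_real C / (\<Prod>t\<in>I. z t - x) = Pf \<beta> m"
      by (simp add: Pf_def C_def I_def z_def x_def)
    also have "(\<Prod>t\<in>set m. 1 / z t ^ K t) = (\<Prod>j<n. 1 / (of_nat (m!j) + \<alpha>) ^ kap k j)"
      unfolding prod_set_nth[OF mf(4)] mf(1)
      by (intro prod.cong) (auto simp: z_def K_def idx_nth[OF mf(4)] mf(1))
    also have "Pf \<beta> m * \<dots> = Z_term k \<beta> \<alpha> m"
    proof -
      have rb': "0 < Re \<beta>" using z_bound(3)[OF ra rb] complex_Re_le_cmod[of "\<alpha> - \<beta>"] by simp
      show ?thesis unfolding n_def
        by (rule Z_term_eq[symmetric]) (use mf kne poch_nz[OF rb'] n_def in auto)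
    qed
    finally show ?thesis .
  qed
  have F1eq: "F1 k \<alpha> \<beta> m = (\<lambda>y. Pf \<alpha> m * (case y of (P,d) \<Rightarrow> (\<Prod>t\<in>set m. u t (d t)) * (\<Prod>t\<in>P. v t (d t))))"
    using Feq by (auto simp: fun_eq_iff)
  show "(F1 k \<alpha> \<beta> m has_sum Z_term k \<beta> \<alpha> m) (fib1 m)"
    unfolding F1eq fib1_def val[symmetric] by (rule has_sum_cmult_right[OF G(1)])
  define u' where "u' t d = cmod x ^ d / cmod (z t) ^ Suc d * (1 / cmod (z t) ^ (K t - 1))" for t d
  define U' where "U' t = 1 / (cmod (z t) - cmod x) * (1 / cmod (z t) ^ (K t - 1))" for t
  define v' where "v' t d = cmod x * (cmod x ^ d / cmod (z t) ^ Suc d)" for t d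
  define V' where "V' t = cmod x * (1 / (cmod (z t) - cmod x))" for t
  have nFeq: "norm (F1 k \<alpha> \<beta> m y) = norm (Pf \<alpha> m) * (case y of (P,d) \<Rightarrow> (\<Prod>t\<in>set m. u' t (d t)) * (\<Prod>t\<in>P. v' t (d t)))" for y
  proof (cases y)
    case (Pair P d)
    have a: "norm (u t e) = u' t e" for t e
      by (simp add: u_def u'_def norm_mult norm_divide norm_power)
    have b: "norm (v t e) = v' t e" for t e
      by (simp add: v_def v'_def norm_mult norm_divide norm_power)
    show ?thesis unfolding Pair Feq norm_mult prod_norm[symmetric] a b by simp
  qed
  have gs': "((\<lambda>d. cmod x ^ d / cmod (z t) ^ Suc d) has_sum 1 / (cmod (z t) - cmod x)) UNIV" for t
    using geom_has_sum(1)[of "cmod x" "cmod (z t)"] zb by simp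
  have gn': "(\<lambda>d. norm (cmod x ^ d / cmod (z t) ^ Suc d)) summable_on UNIV" for t
    using geom_has_sum(2)[of "cmod x" "cmod (z t)"] zb by simp
  have hu': "(u' t has_sum U' t) UNIV" for t
    unfolding u'_def U'_def by (rule has_sum_cmult_left[OF gs'])
  have nu': "(\<lambda>d. norm (u' t d)) summable_on UNIV" for t
    unfolding u'_def norm_mult by (rule summable_on_cmult_left[OF gn'])
  have hv': "(v' t has_sum V' t) UNIV" for t
    unfolding v'_def V'_def by (rule has_sum_cmult_right[OF gs'])
  have nv': "(\<lambda>d. norm (v' t d)) summable_on UNIV" for t
    unfolding v'_def norm_mult by (rule summable_on_cmult_right[OF gn'])
  note G' = G1[of "set m" "Gp m" u' U' v' V', OF finite_set finite_Gp disj hu' nu' hv' nv']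
  have hn: "((\<lambda>y. norm (F1 k \<alpha> \<beta> m y)) has_sum
      norm (Pf \<alpha> m) * ((\<Prod>t\<in>set m. U' t) * (\<Prod>t\<in>Gp m. 1 + V' t))) (fib1 m)"
    unfolding nFeq fib1_def by (rule has_sum_cmult_right[OF G'(1)])
  thus "(\<lambda>y. norm (F1 k \<alpha> \<beta> m y)) summable_on (fib1 m)" by (rule has_sum_imp_summable)
  have "infsum (\<lambda>y. norm (F1 k \<alpha> \<beta> m y)) (fib1 m) = norm (Pf \<alpha> m) * ((\<Prod>t\<in>set m. U' t) * (\<Prod>t\<in>Gp m. 1 + V' t))"
    using hn by (simp add: has_sum_iff)
  also have "\<dots> = C / (\<Prod>t\<in>I. cmod (z t) - cmod x) * (\<Prod>t\<in>set m. 1 / cmod (z t) ^ K t)"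
  proof -
    have pa: "norm (Pf \<alpha> m) = C / (\<Prod>t\<in>I. cmod (z t))"
      by (simp add: Pf_def C_def I_def z_def norm_divide prod_norm norm_mult)
    show ?thesis unfolding pa IG[symmetric] U'_def V'_def
      using val_eq[where C=C, OF sub fI nz0 nzx0 K1] by simp
  qed
  also have "\<dots> \<le> Pf g m * (\<Prod>j<n. 1 / (of_nat (m!j) + g) ^ kap k j)"
  proof (intro mult_mono)
    have C0: "0 \<le> C" by (simp add: C_def)
    show "C / (\<Prod>t\<in>I. cmod (z t) - cmod x) \<le> Pf g m"
      unfolding Pf_def C_def[symmetric] I_def[symmetric] using C0
      by (intro divide_left_mono prod_mono mult_pos_pos prod_pos conjI) (use zb zb2 g0 in \<open>auto intro: add_nonneg_pos\<close>)
    have "(\<Prod>t\<in>set m. 1 / cmod (z t) ^ K t) = (\<Prod>j<n. 1 / cmod (z (m!j)) ^ kap k j)"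
      unfolding prod_set_nth[OF mf(4)] mf(1)
      by (intro prod.cong) (auto simp: K_def idx_nth[OF mf(4)] mf(1))
    also have "\<dots> \<le> (\<Prod>j<n. 1 / (of_nat (m!j) + g) ^ kap k j)"
    proof (intro prod_mono conjI)
      fix j
      have a: "0 < real (m!j) + g" using g0 by simp
      have b: "real (m!j) + g \<le> cmod (z (m!j))" using zb2[of "m!j"] norm_ge_zero[of x] by linarith
      show "0 \<le> 1 / cmod (z (m!j)) ^ kap k j" by simp
      show "1 / cmod (z (m!j)) ^ kap k j \<le> 1 / (real (m!j) + g) ^ kap k j"
        using a b by (intro divide_left_mono power_mono mult_pos_pos zero_less_power) auto
    qed
    finally show "(\<Prod>t\<in>set m. 1 / cmod (z t) ^ K t) \<le> (\<Prod>j<n. 1 / (of_nat (m!j) + g) ^ kap k j)" .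
    show "0 \<le> (\<Prod>t\<in>set m. 1 / cmod (z t) ^ K t)" by (intro prod_nonneg) auto
    show "0 \<le> Pf g m" by (rule less_imp_le[OF Pf_pos[OF g0]])
  qed
  finally show "infsum (\<lambda>y. norm (F1 k \<alpha> \<beta> m y)) (fib1 m) \<le> realZ k (Re \<alpha> - cmod (\<alpha> - \<beta>)) m"
    unfolding realZ_def g_def x_def n_def by simp
qed


lemma ratio_pow_le:
  fixes g :: real and t q :: nat
  assumes g0: "0 < g" and qg: "1 \<le> real q * g" and t1: "1 \<le> t"
  shows "(real t / (real t + g)) ^ q \<le> real t / (real t + 1)"
proof -
  have tp: "0 < real t" using t1 by simp
  have "1 + real q * (g / real t) \<le> (1 + g / real t) ^ q"
  proof (rule Bernoulli_inequality)
    have "0 \<le> g / real t" using g0 tp by simp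
    thus "-1 \<le> g / real t" by linarith
  qed
  moreover have "1 + 1 / real t \<le> 1 + real q * (g / real t)"
    using qg tp by (simp add: divide_right_mono)
  ultimately have b: "1 + 1 / real t \<le> (1 + g / real t) ^ q" by linarith
  have e1: "real t / (real t + g) = 1 / (1 + g / real t)" using tp by (simp add: field_simps)
  have e2: "real t / (real t + 1) = 1 / (1 + 1 / real t)" using tp by (simp add: field_simps)
  show ?thesis unfolding e1 e2 power_one_over
    by (rule divide_left_mono[OF b]) (use tp g0 in \<open>auto intro!: mult_pos_pos zero_less_power add_pos_pos\<close>)
qed

lemma PA:
  fixes g :: real and q a b :: nat
  assumes g0: "0 < g" and qg: "1 \<le> real q * g" and ab: "a \<le> b"
  shows "(real (fact b) / real (fact a) / (\<Prod>t\<in>{a..b}. real t + g) * (real a + g)) ^ q \<le> (real a + 1) / (real b + 1)"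
  using ab
proof (induction b rule: dec_induct)
  case base
  have "real (fact a) / real (fact a) / (\<Prod>t\<in>{a..a}. real t + g) * (real a + g) = 1"
    using g0 by (simp add: add_pos_pos)
  thus ?case by simp
next
  case (step b)
  define Q where "Q = real (fact b) / real (fact a) / (\<Prod>t\<in>{a..b}. real t + g) * (real a + g)"
  have Q0: "0 \<le> Q" unfolding Q_def using g0 by (intro mult_nonneg_nonneg divide_nonneg_nonneg prod_nonneg) auto
  have ins: "{a..Suc b} = insert (Suc b) {a..b}" using step by auto
  have "real (fact (Suc b)) / real (fact a) / (\<Prod>t\<in>{a..Suc b}. real t + g) * (real a + g)
        = Q * (real (Suc b) / (real (Suc b) + g))"
    unfolding Q_def ins using step by (simp add: field_simps)
  hence "(real (fact (Suc b)) / real (fact a) / (\<Prod>t\<in>{a..Suc b}. real t + g) * (real a + g)) ^ q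
        = Q ^ q * (real (Suc b) / (real (Suc b) + g)) ^ q" by (simp only: power_mult_distrib)
  also have "\<dots> \<le> (real a + 1) / (real b + 1) * (real (Suc b) / (real (Suc b) + 1))"
    by (intro mult_mono ratio_pow_le) (use step.IH Q_def g0 qg Q0 in auto)
  also have "\<dots> = (real a + 1) / (real (Suc b) + 1)"
  proof -
    have "real (Suc b) = real b + 1" by simp
    moreover have "real b + 1 \<noteq> 0" "real b + 1 + 1 \<noteq> 0" by linarith+
    ultimately show ?thesis by (simp only:) (simp add: divide_simps)
  qed
  finally show ?case .
qed

lemma Pf_bound:
  fixes g :: real and q :: nat
  assumes g0: "0 < g" and qg: "1 \<le> real q * g" and q0: "0 < q" and le: "m!0 \<le> last m"
  shows "Pf g m * (real (m!0) + g) \<le> ((real (m!0) + 1) / (real (last m) + 1)) powr (1 / real q)"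
proof -
  define Y where "Y = Pf g m * (real (m!0) + g)"
  have Y0: "0 < Y" unfolding Y_def using Pf_pos[OF g0, of m] g0 by (intro mult_pos_pos) auto
  have Yq: "Y ^ q \<le> (real (m!0) + 1) / (real (last m) + 1)"
    unfolding Y_def Pf_def using PA[OF g0 qg le] by simp
  have "Y = (Y ^ q) powr (1 / real q)"
    using Y0 q0 by (simp add: powr_realpow[symmetric] powr_powr)
  also have "\<dots> \<le> ((real (m!0) + 1) / (real (last m) + 1)) powr (1 / real q)"
    by (rule powr_mono2) (use Yq Y0 in auto)
  finally show ?thesis unfolding Y_def .
qed

lemma powr_series_summable:
  fixes e :: real assumes "0 < e"
  shows "(\<lambda>t::nat. (real t + 1) powr (-1-e)) summable_on UNIV"
proof -
  have "summable (\<lambda>t::nat. real t powr (-1-e))" using assms by (simp add: summable_real_powr_iff)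
  hence "summable (\<lambda>t::nat. real (t + 1) powr (-1-e))" by (subst summable_iff_shift) simp
  hence "summable (\<lambda>t::nat. (real t + 1) powr (-1-e))" by (simp add: add.commute)
  thus ?thesis by (rule summable_nonneg_imp_summable_on) simp
qed

lemma W_summable:
  fixes e :: real assumes "0 < e"
  shows "(\<lambda>m. \<Prod>j<n. (real (m!j) + 1) powr (-1-e)) summable_on {m. length m = n}"
proof -
  define h where "h g = map g [0..<n]" for g :: "nat \<Rightarrow> nat"
  have s1: "(\<lambda>g. norm (\<Prod>j<n. (real (g j) + 1) powr (-1-e))) summable_on PiE {..<n} (\<lambda>_. UNIV)"
  proof (rule prod_PiE_abs_summable)
    have "(\<lambda>t::nat. norm ((real t + 1) powr (-1-e))) = (\<lambda>t::nat. (real t + 1) powr (-1-e))"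
      by (rule ext) simp
    thus "(\<lambda>y. norm ((real y + 1) powr (- 1 - e))) summable_on UNIV" if "x \<in> {..<n}" for x
      using powr_series_summable[OF assms] by simp
  qed simp
  have "norm (\<Prod>j<n. (real (g j) + 1) powr (-1-e)) = (\<Prod>j<n. (real (g j) + 1) powr (-1-e))" for g
    unfolding real_norm_def by (intro abs_of_nonneg prod_nonneg) auto
  hence s2: "(\<lambda>g. \<Prod>j<n. (real (g j) + 1) powr (-1-e)) summable_on PiE {..<n} (\<lambda>_. UNIV)"
    using s1 by simp
  have inj: "inj_on h (PiE {..<n} (\<lambda>_. UNIV))"
  proof (rule inj_onI)
    fix f g assume f: "f \<in> PiE {..<n} (\<lambda>_. UNIV)" and g: "g \<in> PiE {..<n} (\<lambda>_. UNIV)" and e: "h f = h g"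
    show "f = g"
    proof (rule ext)
      fix j show "f j = g j"
      proof (cases "j < n")
        case True
        have "h f ! j = h g ! j" using e by simp
        thus ?thesis using True by (simp add: h_def)
      next
        case False thus ?thesis using f g by (auto simp: PiE_def extensional_def)
      qed
    qed
  qed
  have im: "h ` PiE {..<n} (\<lambda>_. UNIV) = {m. length m = n}"
  proof (intro equalityI subsetI)
    fix m assume "m \<in> h ` PiE {..<n} (\<lambda>_. UNIV)"
    then obtain g where "m = h g" by blast
    thus "m \<in> {m. length m = n}" by (simp add: h_def)
  next
    fix m :: "nat list" assume m: "m \<in> {m. length m = n}"
    have "h (restrict (\<lambda>j. m!j) {..<n}) = m" unfolding h_def using m by (intro nth_equalityI) auto
    hence "m = h (restrict (\<lambda>j. m!j) {..<n})" by simp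
    moreover have "restrict (\<lambda>j. m!j) {..<n} \<in> PiE {..<n} (\<lambda>_. UNIV)" by simp
    ultimately show "m \<in> h ` PiE {..<n} (\<lambda>_. UNIV)" by (rule image_eqI)
  qed
  have "((\<lambda>m. \<Prod>j<n. (real (m!j) + 1) powr (-1-e)) \<circ> h) summable_on PiE {..<n} (\<lambda>_. UNIV)"
  proof -
    have "((\<lambda>m. \<Prod>j<n. (real (m!j) + 1) powr (-1-e)) \<circ> h) g = (\<Prod>j<n. (real (g j) + 1) powr (-1-e))" for g
      by (simp add: h_def)
    hence "((\<lambda>m. \<Prod>j<n. (real (m!j) + 1) powr (-1-e)) \<circ> h) = (\<lambda>g. \<Prod>j<n. (real (g j) + 1) powr (-1-e))"
      by (rule ext)
    thus ?thesis using s2 by simp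
  qed
  hence "(\<lambda>m. \<Prod>j<n. (real (m!j) + 1) powr (-1-e)) summable_on h ` PiE {..<n} (\<lambda>_. UNIV)"
    by (subst summable_on_reindex[OF inj])
  thus ?thesis by (simp only: im)
qed



lemma inv_le_C:
  fixes g :: real assumes g0: "0 < g"
  shows "1 / (real t + g) \<le> max 1 (1/g) / (real t + 1)"
proof -
  define C where "C = max 1 (1/g)"
  have "real t + 1 \<le> C * (real t + g)"
  proof (cases "1 \<le> g")
    case True
    hence "C \<ge> 1" by (simp add: C_def)
    hence "1 * (real t + g) \<le> C * (real t + g)" using g0 by (intro mult_right_mono) auto
    hence "real t + g \<le> C * (real t + g)" by simp
    thus ?thesis using True by linarith
  next
    case False
    hence C: "C = 1/g" using g0 by (simp add: C_def field_simps)
    have "g * real t \<le> 1 * real t" using False g0 by (intro mult_right_mono) auto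
    hence "real t \<le> real t / g" using False g0 by (simp add: field_simps)
    thus ?thesis unfolding C using g0 by (simp add: field_simps)
  qed
  thus ?thesis unfolding C_def[symmetric] using g0 by (simp add: field_simps)
qed

lemma inv_pow_le_C:
  fixes g :: real assumes g0: "0 < g" and K: "1 \<le> K"
  shows "1 / (real t + g) ^ K \<le> max 1 (1/g) ^ K / (real t + 1)"
proof -
  define C where "C = max 1 (1/g)"
  have "1 / (real t + g) ^ K = (1 / (real t + g)) ^ K" by (simp add: power_one_over)
  also have "\<dots> \<le> (C / (real t + 1)) ^ K"
    by (intro power_mono) (use inv_le_C[OF g0, of t] g0 in \<open>auto simp: C_def\<close>)
  also have "\<dots> = C ^ K / (real t + 1) ^ K" by (simp add: power_divide)
  also have "\<dots> \<le> C ^ K / (real t + 1)"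
    by (intro divide_left_mono self_le_power mult_pos_pos) (use K in \<open>auto simp: C_def\<close>)
  finally show ?thesis by (simp add: C_def)
qed

lemma realZ_bound:
  fixes g :: real
  assumes adm: "admissible k" and g0: "0 < g" and q2: "2 \<le> q" and qg: "1 \<le> real q * g"
    and m: "m \<in> incr_tuples (length k)"
  shows "realZ k g m \<le> max 1 (1/g) ^ Suc (\<Sum>j<length k. kap k j) *
           (\<Prod>j<length k. (real (m!j) + 1) powr (-1 - 1 / (real q * real (length k))))"
proof -
  define n where "n = length k"
  define C where "C = max 1 (1/g)"
  define c where "c = 1 / real q"
  define e where "e = c / real n"
  define A where "A = real (m!0) + 1"
  define B where "B = real (last m) + 1"
  have kne: "k \<noteq> []" using adm by (auto simp: admissible_def)
  hence n0: "0 < n" by (simp add: n_def)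
  note mf = incr_facts[OF m[folded n_def] n0]
  have C1: "1 \<le> C" by (simp add: C_def)
  have c0: "0 < c" and c2: "c \<le> 1/2" using q2 by (auto simp: c_def field_simps)
  have e0: "0 < e" using c0 n0 by (simp add: e_def)
  have ec: "e \<le> c" using c0 n0 by (simp add: e_def field_simps)
  have ne: "real (n - 1) * e \<le> c" using c0 n0 by (simp add: e_def field_simps)
  have A1: "1 \<le> A" by (simp add: A_def)
  have AB: "A \<le> B" using mf(3) by (simp add: A_def B_def)
  have B1: "1 \<le> B" using A1 AB by simp
  have eq_e: "1 / (real q * real (length k)) = e" by (simp add: e_def c_def n_def)
  define P1 where "P1 = (\<Prod>j<n. (real (m!j) + 1) powr (-1-e))"
  define P2 where "P2 = (\<Prod>j<n. (real (m!j) + 1) powr e)"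
  have P1_0: "0 \<le> P1" unfolding P1_def by (intro prod_nonneg) auto
  have s3: "(\<Prod>j<n. 1 / (real (m!j) + g) ^ kap k j) \<le> C ^ (\<Sum>j<n. kap k j) * (\<Prod>j<n. 1 / (real (m!j) + 1))"
  proof -
    have "(\<Prod>j<n. 1 / (real (m!j) + g) ^ kap k j) \<le> (\<Prod>j<n. C ^ kap k j / (real (m!j) + 1))"
    proof (intro prod_mono conjI)
      fix j assume j: "j \<in> {..<n}"
      have "0 < (real (m!j) + g) ^ kap k j" using g0 by simp
      thus "0 \<le> 1 / (real (m!j) + g) ^ kap k j" by simp
      show "1 / (real (m!j) + g) ^ kap k j \<le> C ^ kap k j / (real (m!j) + 1)"
        unfolding C_def by (rule inv_pow_le_C[OF g0 kap_pos[OF adm]]) (use j n_def in auto)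
    qed
    also have "\<dots> = (\<Prod>j<n. C ^ kap k j) * (\<Prod>j<n. 1 / (real (m!j) + 1))"
      by (simp add: prod.distrib[symmetric])
    also have "(\<Prod>j<n. C ^ kap k j) = C ^ (\<Sum>j<n. kap k j)" by (simp add: power_sum)
    finally show ?thesis .
  qed
  have s4: "Pf g m \<le> C / A * (A / B) powr c"
  proof -
    have "Pf g m * (real (m!0) + g) \<le> (A / B) powr c"
      unfolding A_def B_def c_def using Pf_bound[OF g0 qg _ mf(3)] q2 by simp
    hence "Pf g m \<le> (A / B) powr c * (1 / (real (m!0) + g))"
      using g0 by (simp add: field_simps)
    also have "\<dots> \<le> (A / B) powr c * (C / A)"
      by (intro mult_left_mono) (use inv_le_C[OF g0, of "m!0"] in \<open>auto simp: C_def A_def\<close>)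
    finally show ?thesis by (simp add: mult.commute)
  qed
  have s5: "(\<Prod>j<n. 1 / (real (m!j) + 1)) = P1 * P2"
    unfolding P1_def P2_def prod.distrib[symmetric]
  proof (intro prod.cong refl)
    fix j
    have p: "0 < real (m!j) + 1" by simp
    have "(real (m!j) + 1) powr (-1-e) * (real (m!j) + 1) powr e = (real (m!j) + 1) powr (-1)"
      by (simp add: powr_add[symmetric])
    thus "1 / (real (m!j) + 1) = (real (m!j) + 1) powr (-1-e) * (real (m!j) + 1) powr e"
      using powr_neg_one[OF p] by simp
  qed
  have s6: "P2 \<le> A powr e * B powr (real (n - 1) * e)"
  proof -
    have nS: "n = Suc (n - 1)" using n0 by simp
    have "P2 = (real (m!0) + 1) powr e * (\<Prod>j<n-1. (real (m!Suc j) + 1) powr e)"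
      unfolding P2_def by (subst nS) (simp only: prod.lessThan_Suc_shift)
    also have "(\<Prod>j<n-1. (real (m!Suc j) + 1) powr e) \<le> (\<Prod>j<n-1. B powr e)"
    proof (intro prod_mono conjI)
      fix j assume j: "j \<in> {..<n-1}"
      have "m!Suc j \<le> m!(n-1)" using j mf by (intro ssorted_le) auto
      hence "real (m!Suc j) + 1 \<le> B" using mf(5) by (simp add: B_def)
      thus "(real (m!Suc j) + 1) powr e \<le> B powr e" using e0 by (intro powr_mono2) auto
    qed simp
    also have "(\<Prod>j<n-1. B powr e) = B powr (real (n - 1) * e)"
      using B1 by (simp add: powr_power)
    finally show ?thesis using e0 by (simp add: A_def mult_left_mono)
  qed
  have br: "C / A * (A / B) powr c * (A powr e * B powr (real (n - 1) * e)) \<le> C"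
  proof -
    have "(A / B) powr c = A powr c / B powr c" by (rule powr_divide)
    hence "C / A * (A / B) powr c * (A powr e * B powr (real (n - 1) * e))
         = C * (A powr (c + e) / A) * (B powr (real (n - 1) * e) / B powr c)"
      by (simp add: powr_add field_simps)
    also have "\<dots> \<le> C * 1 * 1"
    proof (intro mult_mono)
      have "A powr (c + e) \<le> A powr 1" by (rule powr_mono) (use c2 ec A1 in auto)
      thus "A powr (c + e) / A \<le> 1" using A1 by simp
      have "B powr (real (n - 1) * e) \<le> B powr c" by (rule powr_mono) (use ne B1 in auto)
      thus "B powr (real (n - 1) * e) / B powr c \<le> 1" using B1 by simp
    qed (use C1 A1 B1 in auto)
    finally show ?thesis by simp
  qed
  have "realZ k g m = Pf g m * (\<Prod>j<n. 1 / (real (m!j) + g) ^ kap k j)"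
    by (simp add: realZ_def n_def)
  also have "\<dots> \<le> (C / A * (A / B) powr c) * (C ^ (\<Sum>j<n. kap k j) * (P1 * P2))"
    unfolding s5[symmetric]
  proof (intro mult_mono s3 s4)
    show "0 \<le> C / A * (A / B) powr c" using C1 A1 by simp
    show "0 \<le> (\<Prod>j<n. 1 / (real (m!j) + g) ^ kap k j)" using g0 by (intro prod_nonneg) simp
  qed
  also have "\<dots> = C ^ (\<Sum>j<n. kap k j) * P1 * (C / A * (A / B) powr c * P2)" by (simp add: ac_simps)
  also have "\<dots> \<le> C ^ (\<Sum>j<n. kap k j) * P1 * C"
  proof (intro mult_left_mono)
    have "C / A * (A / B) powr c * P2 \<le> C / A * (A / B) powr c * (A powr e * B powr (real (n - 1) * e))"
      by (intro mult_left_mono s6) (use C1 A1 in auto)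
    thus "C / A * (A / B) powr c * P2 \<le> C" using br by linarith
  qed (use C1 P1_0 in auto)
  also have "\<dots> = C ^ Suc (\<Sum>j<n. kap k j) * P1" by (simp add: ac_simps)
  finally show ?thesis unfolding eq_e P1_def C_def n_def .
qed

lemma realZ_summable:
  fixes g :: real
  assumes adm: "admissible k" and g0: "0 < g"
  shows "(\<lambda>m. realZ k g m) summable_on incr_tuples (length k)"
proof -
  define q where "q = max 2 (nat \<lceil>1/g\<rceil>)"
  define n where "n = length k"
  have n0: "0 < n" using adm by (auto simp: admissible_def n_def)
  have q2: "2 \<le> q" by (simp add: q_def)
  have "1/g \<le> real (nat \<lceil>1/g\<rceil>)" by linarith
  also have "\<dots> \<le> real q" by (simp add: q_def)
  finally have "1/g \<le> real q" .
  hence qg: "1 \<le> real q * g" using g0 by (simp add: field_simps)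
  define e where "e = 1 / (real q * real n)"
  have e0: "0 < e" using q2 n0 by (simp add: e_def)
  define D where "D = max 1 (1/g) ^ Suc (\<Sum>j<length k. kap k j)"
  have "(\<lambda>m. \<Prod>j<n. (real (m!j) + 1) powr (-1-e)) summable_on {m. length m = n}"
    by (rule W_summable[OF e0])
  hence "(\<lambda>m. \<Prod>j<n. (real (m!j) + 1) powr (-1-e)) summable_on incr_tuples n"
    by (rule summable_on_subset) (auto simp: incr_tuples_def)
  hence s: "(\<lambda>m. D * (\<Prod>j<n. (real (m!j) + 1) powr (-1-e))) summable_on incr_tuples n"
    by (rule summable_on_cmult_right)
  show ?thesis
  proof (rule summable_on_comparison_test[OF s[unfolded n_def]])
    fix m assume m: "m \<in> incr_tuples (length k)"
    show "realZ k g m \<le> D * (\<Prod>j<length k. (real (m!j) + 1) powr (-1-e))"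
      using realZ_bound[OF adm g0 q2 qg m] by (simp add: D_def e_def n_def)
    show "0 \<le> realZ k g m" by (rule realZ_nonneg[OF g0])
  qed
qed


lemma finite_comps[simp]: "finite (comps r s)"
proof -
  have "comps r s \<subseteq> {xs. set xs \<subseteq> {..s} \<and> length xs = r}"
    by (auto simp: comps_def member_le_sum_list)
  thus ?thesis by (rule finite_subset) (intro finite_lists_length_eq, simp)
qed

lemma finite_tuple_families[simp]: "finite (tuple_families k i)"
proof -
  define X where "X = {xs. set xs \<subseteq> {..i} \<and> length xs \<le> Max (insert 0 (set k))}"
  have fX: "finite X" unfolding X_def by (rule finite_lists_length_le) simp
  have "tuple_families k i \<subseteq> {ts. set ts \<subseteq> X \<and> length ts = length k}"
  proof (rule subsetI, rule CollectI, rule conjI)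
    fix ts assume ts: "ts \<in> tuple_families k i"
    show "length ts = length k" using ts by (simp add: tuple_families_def)
    show "set ts \<subseteq> X"
    proof
      fix t assume "t \<in> set ts"
      then obtain j where j: "j < length ts" "t = ts!j" by (auto simp: in_set_conv_nth)
      have lj: "j < length k" using j ts by (simp add: tuple_families_def)
      have "length t \<le> k!j" using ts lj j by (auto simp: tuple_families_def)
      also have "k!j \<le> Max (insert 0 (set k))" using lj by (intro Max_ge) auto
      finally have l: "length t \<le> Max (insert 0 (set k))" .
      have "sum_list t \<le> sum_list (map sum_list ts)"
        using j by (intro member_le_sum_list) auto
      hence "sum_list t \<le> i" using ts by (simp add: tuple_families_def)
      hence "set t \<subseteq> {..i}" using member_le_sum_list[of _ t] by fastforce
      thus "t \<in> X" using l by (simp add: X_def)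
    qed
  qed
  thus ?thesis by (rule finite_subset) (intro finite_lists_length_eq fX)
qed

lemma group_sums:
  fixes H :: "nat \<times> ('j \<times> 'm) \<Rightarrow> complex" and Y :: "'j \<Rightarrow> 'm \<Rightarrow> complex"
  assumes hs: "(H has_sum T) (Sigma UNIV (\<lambda>l. Sigma (J l) (\<lambda>j. M j)))"
    and fin: "\<And>l. finite (J l)"
    and HY: "\<And>l j m. j \<in> J l \<Longrightarrow> m \<in> M j \<Longrightarrow> H (l, (j, m)) = x ^ l * Y j m"
  shows "(\<lambda>l. x ^ l * (\<Sum>j\<in>J l. infsum (Y j) (M j))) sums T"
proof -
  have sH: "H summable_on (Sigma UNIV (\<lambda>l. Sigma (J l) (\<lambda>j. M j)))" using hs by (rule has_sum_imp_summable)
  have s1: "(\<lambda>y. H (l, y)) summable_on Sigma (J l) (\<lambda>j. M j)" for l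
    using summable_on_SigmaD1[of "\<lambda>l y. H (l, y)" UNIV "\<lambda>l. Sigma (J l) (\<lambda>j. M j)" l] sH
    by (simp add: case_prod_unfold)
  have s2: "(\<lambda>m. H (l, (j, m))) summable_on M j" if "j \<in> J l" for l j
    using summable_on_SigmaD1[of "\<lambda>j m. H (l, (j, m))" "J l" "\<lambda>j. M j" j] s1[of l] that
    by (simp add: case_prod_unfold)
  have inner: "((\<lambda>m. H (l, (j, m))) has_sum x ^ l * infsum (Y j) (M j)) (M j)" if j: "j \<in> J l" for l j
  proof (cases "x ^ l = 0")
    case True
    hence "((\<lambda>m. H (l, (j, m))) has_sum 0) (M j)"
      using HY[OF j] by (subst has_sum_cong[where g="\<lambda>_. 0"]) auto
    thus ?thesis using True by (metis mult_zero_left)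
  next
    case False
    have "(\<lambda>m. x ^ l * Y j m) summable_on M j"
      using s2[OF j] HY[OF j] by (subst summable_on_cong[where g="\<lambda>m. H (l, (j, m))"]) auto
    hence "Y j summable_on M j" using False summable_on_cmult_right' by blast
    hence "((\<lambda>m. x ^ l * Y j m) has_sum x ^ l * infsum (Y j) (M j)) (M j)"
      by (intro has_sum_cmult_right) (simp add: has_sum_infsum)
    thus ?thesis using HY[OF j] by (subst has_sum_cong[where g="\<lambda>m. x ^ l * Y j m"]) auto
  qed
  have mid: "((\<lambda>y. H (l, y)) has_sum x ^ l * (\<Sum>j\<in>J l. infsum (Y j) (M j))) (Sigma (J l) (\<lambda>j. M j))" for l
  proof -
    have o: "((\<lambda>j. x ^ l * infsum (Y j) (M j)) has_sum (x ^ l * (\<Sum>j\<in>J l. infsum (Y j) (M j)))) (J l)"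
      using fin[of l] by (intro has_sum_finiteI) (simp_all add: sum_distrib_left)
    show ?thesis
      using has_sum_SigmaI[where f="\<lambda>y. H (l, y)" and A="J l" and B="\<lambda>j. M j",
                           OF _ o s1[of l]] inner by (simp add: case_prod_unfold)
  qed
  have "((\<lambda>l. x ^ l * (\<Sum>j\<in>J l. infsum (Y j) (M j))) has_sum T) UNIV"
    by (rule has_sum_SigmaD[OF hs]) (rule mid)
  thus ?thesis by (rule has_sum_imp_sums)
qed

lemma src_total:
  fixes F :: "nat list \<Rightarrow> 'b \<Rightarrow> complex" and R :: "nat list \<Rightarrow> real"
  assumes inner: "\<And>m. m \<in> A \<Longrightarrow> (F m has_sum Zt m) (B m)"
    and nsum: "\<And>m. m \<in> A \<Longrightarrow> (\<lambda>y. norm (F m y)) summable_on B m"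
    and nbound: "\<And>m. m \<in> A \<Longrightarrow> infsum (\<lambda>y. norm (F m y)) (B m) \<le> R m"
    and Rs: "R summable_on A"
  shows "((\<lambda>(m,y). F m y) has_sum infsum Zt A) (Sigma A B)"
proof -
  have gs: "(\<lambda>m. infsum (\<lambda>y. norm (F m y)) (B m)) summable_on A"
    by (rule summable_on_comparison_test[OF Rs]) (use nbound in \<open>auto intro: infsum_nonneg\<close>)
  have "(\<lambda>(m,y). norm (F m y)) summable_on Sigma A B"
    by (rule summable_on_SigmaI[OF _ gs]) (use nsum in \<open>auto simp: has_sum_infsum\<close>)
  hence "(\<lambda>x. norm ((\<lambda>(m,y). F m y) x)) summable_on Sigma A B" by (simp add: case_prod_unfold)
  hence "(\<lambda>(m,y). F m y) summable_on Sigma A B" by (rule abs_summable_summable)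
  then obtain T where T: "((\<lambda>(m,y). F m y) has_sum T) (Sigma A B)" by (auto simp: summable_on_def)
  have "(Zt has_sum T) A" by (rule has_sum_SigmaD[OF T]) (use inner in simp)
  hence "infsum Zt A = T" by (simp add: has_sum_iff)
  thus ?thesis using T by simp
qed

lemma prod_geo:
  fixes x z :: "'a::field"
  assumes "finite A"
  shows "(\<Prod>p\<in>A. x ^ f p / z ^ Suc (f p)) = x ^ (\<Sum>p\<in>A. f p) / z ^ (card A + (\<Sum>p\<in>A. f p))"
  using assms by (induction A rule: finite_induct) (auto simp: power_add field_simps)

lemma tf_len:
  assumes "ts \<in> tuple_families k i" "j < length k"
  shows "length (ts!j) = kap k j - 1" "length ts = length k"
  using assms by (auto simp: tuple_families_def kap_def)

lemma sum_if_last: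
  fixes t :: "nat list"
  assumes "length t = K - 1" "1 \<le> K"
  shows "(\<Sum>p<K. if p < K - 1 then t!p else a) = sum_list t + a"
proof -
  have K: "{..<K} = insert (K-1) {..<K-1}" using assms by auto
  have "(\<Sum>p<K. if p < K - 1 then t!p else a) = a + (\<Sum>p<K-1. if p < K - 1 then t!p else a)"
    unfolding K by (subst sum.insert) auto
  also have "(\<Sum>p<K-1. if p < K - 1 then t!p else a) = (\<Sum>p<K-1. t!p)" by (intro sum.cong) auto
  also have "\<dots> = sum_list t" using assms by (simp add: sum_list_sum_nth atLeast0LessThan)
  finally show ?thesis by simp
qed

lemma sum_S2: "(\<Sum>jp\<in>S2 k. f jp) = (\<Sum>j<length k. \<Sum>p<kap k j. f (j,p))"
  unfolding S2_def by (subst sum.Sigma) auto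

lemma prod_S2: "(\<Prod>jp\<in>S2 k. f jp) = (\<Prod>j<length k. \<Prod>p<kap k j. f (j,p))"
  unfolding S2_def by (subst prod.Sigma) auto


definition J2 :: "nat list \<Rightarrow> nat \<Rightarrow> (nat \<times> (nat list list \<times> nat list)) set" where
  "J2 k l = Sigma {..l} (\<lambda>i. Sigma (tuple_families k i) (\<lambda>_. comps (length k) (l - i)))"

definition T2 :: "nat list \<Rightarrow> (nat \<times> ((nat \<times> (nat list list \<times> nat list)) \<times> nat list)) set" where
  "T2 k = Sigma UNIV (\<lambda>l. Sigma (J2 k l) (\<lambda>_. incr_tuples (length k)))"

definition SRC2 :: "nat list \<Rightarrow> (nat list \<times> (nat \<times> nat \<Rightarrow> nat)) set" where
  "SRC2 k = Sigma (incr_tuples (length k)) (\<lambda>m. PiE (S2 k) (\<lambda>_. UNIV))"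

definition phi2 :: "nat list \<Rightarrow> nat list \<times> (nat \<times> nat \<Rightarrow> nat) \<Rightarrow> nat \<times> ((nat \<times> (nat list list \<times> nat list)) \<times> nat list)" where
  "phi2 k = (\<lambda>(m,c). ((\<Sum>j<length k. \<Sum>p<kap k j. c (j,p)),
      (((\<Sum>j<length k. \<Sum>p<kap k j - 1. c (j,p)),
        (map (\<lambda>j. map (\<lambda>p. c (j,p)) [0..<kap k j - 1]) [0..<length k],
         map (\<lambda>j. c (j, kap k j - 1)) [0..<length k])), m)))"

definition psi2 :: "nat list \<Rightarrow> nat \<times> ((nat \<times> (nat list list \<times> nat list)) \<times> nat list) \<Rightarrow> nat list \<times> (nat \<times> nat \<Rightarrow> nat)" where
  "psi2 k = (\<lambda>(l,((i,(ts,ls)),m)). (m, (\<lambda>(j,p). if (j,p) \<in> S2 k then (if p < kap k j - 1 then ts!j!p else ls!j) else undefined)))"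

lemma sum_list_nth_sum:
  fixes ts :: "'a::comm_monoid_add list"
  shows "sum_list ts = (\<Sum>j<length ts. ts!j)"
  by (simp add: sum_list_sum_nth atLeast0LessThan)

lemma T2_mem:
  assumes "(l,((i,(ts,ls)),m)) \<in> T2 k"
  shows "i \<le> l" "ts \<in> tuple_families k i" "ls \<in> comps (length k) (l - i)" "m \<in> incr_tuples (length k)"
  using assms by (auto simp: T2_def J2_def)

lemma bij2_C1:
  assumes adm: "admissible k" and a: "a \<in> T2 k"
  shows "phi2 k (psi2 k a) = a" and "psi2 k a \<in> SRC2 k"
proof -
  obtain l i ts ls m where av: "a = (l,((i,(ts,ls)),m))" by (cases a) auto
  note mem = T2_mem[OF a[unfolded av]]
  define n where "n = length k"
  define c where "c = (\<lambda>(j,p). if (j,p) \<in> S2 k then (if p < kap k j - 1 then ts!j!p else ls!j) else undefined)"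
  have ps: "psi2 k a = (m, c)" by (simp add: psi2_def av c_def)
  have lts: "length ts = n" using mem(2) by (simp add: tuple_families_def n_def)
  have lls: "length ls = n" using mem(3) by (simp add: comps_def n_def)
  have ltsj: "length (ts!j) = kap k j - 1" if "j < n" for j using tf_len[OF mem(2)] that n_def by simp
  have K1: "1 \<le> kap k j" if "j < n" for j using kap_pos[OF adm] that n_def by simp
  have cjp: "c (j,p) = (if p < kap k j - 1 then ts!j!p else ls!j)" if "j < n" "p < kap k j" for j p
    using that by (simp add: c_def S2_def n_def)
  have s1: "(\<Sum>p<kap k j. c (j,p)) = sum_list (ts!j) + ls!j" if j: "j < n" for j
  proof -
    have "(\<Sum>p<kap k j. c (j,p)) = (\<Sum>p<kap k j. if p < kap k j - 1 then ts!j!p else ls!j)"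
      using j by (intro sum.cong) (auto simp: cjp)
    also have "\<dots> = sum_list (ts!j) + ls!j" by (rule sum_if_last[OF ltsj[OF j] K1[OF j]])
    finally show ?thesis .
  qed
  have s2: "(\<Sum>p<kap k j - 1. c (j,p)) = sum_list (ts!j)" if j: "j < n" for j
  proof -
    have "(\<Sum>p<kap k j - 1. c (j,p)) = (\<Sum>p<kap k j - 1. ts!j!p)"
      using j by (intro sum.cong) (auto simp: cjp)
    also have "\<dots> = sum_list (ts!j)" using ltsj[OF j] by (simp add: sum_list_nth_sum)
    finally show ?thesis .
  qed
  have sts: "(\<Sum>j<n. sum_list (ts!j)) = i"
    using mem(2) lts unfolding n_def by (simp add: tuple_families_def sum_list_nth_sum[of "map sum_list ts"])
  have sls: "(\<Sum>j<n. ls!j) = l - i" using mem(3) lls unfolding n_def by (simp add: comps_def sum_list_nth_sum[of ls])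
  have e1: "(\<Sum>j<n. \<Sum>p<kap k j. c (j,p)) = l"
    using s1 sts sls mem(1) by (simp add: sum.distrib)
  have e2: "(\<Sum>j<n. \<Sum>p<kap k j - 1. c (j,p)) = i"
    using s2 sts by simp
  have e3: "map (\<lambda>j. map (\<lambda>p. c (j,p)) [0..<kap k j - 1]) [0..<n] = ts"
  proof (rule nth_equalityI)
    show "length (map (\<lambda>j. map (\<lambda>p. c (j,p)) [0..<kap k j - 1]) [0..<n]) = length ts" using lts by simp
    fix j assume "j < length (map (\<lambda>j. map (\<lambda>p. c (j,p)) [0..<kap k j - 1]) [0..<n])"
    hence j: "j < n" by simp
    show "map (\<lambda>j. map (\<lambda>p. c (j,p)) [0..<kap k j - 1]) [0..<n] ! j = ts ! j"
      using j ltsj[OF j] by (auto intro!: nth_equalityI simp: cjp)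
  qed
  have e4: "map (\<lambda>j. c (j, kap k j - 1)) [0..<n] = ls"
  proof (rule nth_equalityI)
    fix j assume "j < length (map (\<lambda>j. c (j, kap k j - 1)) [0..<n])"
    hence j: "j < n" by simp
    have "c (j, kap k j - 1) = ls!j" using cjp[OF j, of "kap k j - 1"] K1[OF j] by simp
    thus "map (\<lambda>j. c (j, kap k j - 1)) [0..<n] ! j = ls ! j" using j by simp
  qed (use lls in simp)
  have "phi2 k (m, c) = a"
    unfolding phi2_def av using e1 e2 e3 e4 by (simp add: n_def)
  thus "phi2 k (psi2 k a) = a" by (simp only: ps)
  have "(m, c) \<in> SRC2 k"
    unfolding SRC2_def using mem(4) by (auto simp: c_def PiE_def extensional_def)
  thus "psi2 k a \<in> SRC2 k" by (simp only: ps)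
qed

lemma bij2_C3:
  assumes adm: "admissible k" and b: "b \<in> SRC2 k"
  shows "psi2 k (phi2 k b) = b" and "phi2 k b \<in> T2 k"
proof -
  obtain m c where bv: "b = (m, c)" by (cases b) auto
  have m: "m \<in> incr_tuples (length k)" and c: "c \<in> PiE (S2 k) (\<lambda>_. UNIV)" using b by (auto simp: SRC2_def bv)
  define n where "n = length k"
  define l where "l = (\<Sum>j<n. \<Sum>p<kap k j. c (j,p))"
  define i where "i = (\<Sum>j<n. \<Sum>p<kap k j - 1. c (j,p))"
  define ts where "ts = map (\<lambda>j. map (\<lambda>p. c (j,p)) [0..<kap k j - 1]) [0..<n]"
  define ls where "ls = map (\<lambda>j. c (j, kap k j - 1)) [0..<n]"
  have ph: "phi2 k b = (l, ((i, (ts, ls)), m))" by (simp add: phi2_def bv l_def i_def ts_def ls_def n_def)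
  have K1: "1 \<le> kap k j" if "j < n" for j using kap_pos[OF adm] that n_def by simp
  have split: "(\<Sum>p<kap k j. c (j,p)) = (\<Sum>p<kap k j - 1. c (j,p)) + c (j, kap k j - 1)" if j: "j < n" for j
  proof -
    have "{..<kap k j} = insert (kap k j - 1) {..<kap k j - 1}" using K1[OF j] by auto
    thus ?thesis by (simp add: add.commute)
  qed
  have "(\<lambda>(j,p). if (j,p) \<in> S2 k then (if p < kap k j - 1 then ts!j!p else ls!j) else undefined) = c"
  proof (rule ext, clarify)
    fix j p
    show "(if (j,p) \<in> S2 k then (if p < kap k j - 1 then ts!j!p else ls!j) else undefined) = c (j,p)"
    proof (cases "(j,p) \<in> S2 k")
      case inS: True
      hence j: "j < n" and p: "p < kap k j" by (auto simp: S2_def n_def)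
      show ?thesis
      proof (cases "p < kap k j - 1")
        case True thus ?thesis using j inS by (simp add: ts_def)
      next
        case False hence "p = kap k j - 1" using p by simp
        thus ?thesis using j inS by (simp add: ls_def)
      qed
    next
      case False thus ?thesis using c by (auto simp: PiE_def extensional_def)
    qed
  qed
  thus "psi2 k (phi2 k b) = b" unfolding ph by (simp add: psi2_def bv)
  have il: "i \<le> l" unfolding i_def l_def using split by (auto intro!: sum_mono)
  have "ts \<in> tuple_families k i"
  proof -
    have "sum_list (map sum_list ts) = i"
      by (simp add: ts_def i_def sum_list_sum_nth atLeast0LessThan)
    moreover have "length (ts ! j) = (if j = length k - 1 then k ! j - 2 else k ! j - 1)" if "j < length k" for j
      using that by (simp add: ts_def n_def kap_def numeral_2_eq_2)
    ultimately show ?thesis by (simp add: tuple_families_def ts_def n_def)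
  qed
  moreover have "ls \<in> comps (length k) (l - i)"
  proof -
    have "sum_list ls = (\<Sum>j<n. c (j, kap k j - 1))" by (simp add: ls_def sum_list_sum_nth atLeast0LessThan)
    also have "\<dots> = l - i" unfolding l_def i_def using split by (simp add: sum.distrib)
    finally show ?thesis by (simp add: comps_def ls_def n_def)
  qed
  ultimately show "phi2 k b \<in> T2 k" unfolding ph using il m by (simp add: T2_def J2_def n_def)
qed

definition H2 :: "nat list \<Rightarrow> complex \<Rightarrow> complex \<Rightarrow> nat \<times> ((nat \<times> (nat list list \<times> nat list)) \<times> nat list) \<Rightarrow> complex" where
  "H2 k \<alpha> \<beta> = (\<lambda>(l,((i,(ts,ls)),m)). (\<alpha>-\<beta>) ^ l * Z_term (map2 (+) (raise_index k ts) ls) \<alpha> \<alpha> m)"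

lemma bij2_C5:
  fixes \<alpha> \<beta> :: complex
  assumes adm: "admissible k" and ra: "0 < Re \<alpha>" and a: "a \<in> T2 k"
  shows "(\<lambda>(m,c). F2 k \<alpha> \<beta> m c) (psi2 k a) = H2 k \<alpha> \<beta> a"
proof -
  obtain l i ts ls m where av: "a = (l,((i,(ts,ls)),m))" by (cases a) auto
  note mem = T2_mem[OF a[unfolded av]]
  define n where "n = length k"
  define x where "x = \<alpha> - \<beta>"
  define z where "z j = of_nat (m!j) + \<alpha>" for j
  define c where "c = (\<lambda>(j,p). if (j,p) \<in> S2 k then (if p < kap k j - 1 then ts!j!p else ls!j) else undefined)"
  define sj where "sj j = sum_list (ts!j) + ls!j" for j
  have ps: "psi2 k a = (m, c)" by (simp add: psi2_def av c_def)
  have kne: "k \<noteq> []" using adm by (auto simp: admissible_def)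
  hence n0: "0 < n" by (simp add: n_def)
  note mf = incr_facts[OF mem(4)[folded n_def] n0]
  have lts: "length ts = n" using mem(2) by (simp add: tuple_families_def n_def)
  have lls: "length ls = n" using mem(3) by (simp add: comps_def n_def)
  have ltsj: "length (ts!j) = kap k j - 1" if "j < n" for j using tf_len[OF mem(2)] that n_def by simp
  have K1: "1 \<le> kap k j" if "j < n" for j using kap_pos[OF adm] that n_def by simp
  have cjp: "c (j,p) = (if p < kap k j - 1 then ts!j!p else ls!j)" if "j < n" "p < kap k j" for j p
    using that by (simp add: c_def S2_def n_def)
  have s1: "(\<Sum>p<kap k j. c (j,p)) = sj j" if j: "j < n" for j
  proof -
    have "(\<Sum>p<kap k j. c (j,p)) = (\<Sum>p<kap k j. if p < kap k j - 1 then ts!j!p else ls!j)"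
      using j by (intro sum.cong) (auto simp: cjp)
    also have "\<dots> = sum_list (ts!j) + ls!j" by (rule sum_if_last[OF ltsj[OF j] K1[OF j]])
    finally show ?thesis by (simp add: sj_def)
  qed
  have sts: "(\<Sum>j<n. sum_list (ts!j)) = i"
    using mem(2) lts unfolding n_def by (simp add: tuple_families_def sum_list_nth_sum[of "map sum_list ts"])
  have sls: "(\<Sum>j<n. ls!j) = l - i" using mem(3) lls unfolding n_def by (simp add: comps_def sum_list_nth_sum[of ls])
  have sl: "(\<Sum>j<n. sj j) = l" using sts sls mem(1) by (simp add: sj_def sum.distrib)
  define k2 where "k2 = map2 (+) (raise_index k ts) ls"
  have lk2: "length k2 = n" using lts lls by (simp add: k2_def raise_index_def n_def)
  have k2j: "k2 ! j = k!j + sj j" if "j < n" for j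
    using that lts lls by (simp add: k2_def raise_index_def sj_def n_def)
  have kapk2: "kap k2 j = kap k j + sj j" if j: "j < n" for j
  proof -
    have "1 \<le> kap k j" by (rule K1[OF j])
    thus ?thesis using k2j[OF j] lk2 by (auto simp: kap_def n_def)
  qed
  have "F2 k \<alpha> \<beta> m c = Pf \<alpha> m * (\<Prod>j<n. \<Prod>p<kap k j. x ^ c (j,p) / z j ^ Suc (c (j,p)))"
    unfolding F2_def prod_S2 by (simp add: x_def z_def n_def)
  also have "(\<Prod>j<n. \<Prod>p<kap k j. x ^ c (j,p) / z j ^ Suc (c (j,p))) = (\<Prod>j<n. x ^ sj j / z j ^ (kap k j + sj j))"
  proof (intro prod.cong refl)
    fix j assume "j \<in> {..<n}"
    hence j: "j < n" by simp
    show "(\<Prod>p<kap k j. x ^ c (j,p) / z j ^ Suc (c (j,p))) = x ^ sj j / z j ^ (kap k j + sj j)"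
      using prod_geo[of "{..<kap k j}" x "\<lambda>p. c (j,p)" "z j"] s1[OF j] by simp
  qed
  also have "\<dots> = (\<Prod>j<n. x ^ sj j) * (\<Prod>j<n. 1 / z j ^ (kap k j + sj j))"
    by (simp add: prod.distrib[symmetric])
  also have "(\<Prod>j<n. x ^ sj j) = x ^ l" by (simp add: power_sum[symmetric] sl)
  also have "(\<Prod>j<n. 1 / z j ^ (kap k j + sj j)) = (\<Prod>j<length k2. 1 / (of_nat (m!j) + \<alpha>) ^ kap k2 j)"
    unfolding lk2 by (intro prod.cong) (auto simp: kapk2 z_def)
  finally have "F2 k \<alpha> \<beta> m c = x ^ l * (Pf \<alpha> m * (\<Prod>j<length k2. 1 / (of_nat (m!j) + \<alpha>) ^ kap k2 j))"
    by (simp add: ac_simps)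
  also have "Pf \<alpha> m * (\<Prod>j<length k2. 1 / (of_nat (m!j) + \<alpha>) ^ kap k2 j) = Z_term k2 \<alpha> \<alpha> m"
    by (rule Z_term_eq[symmetric]) (use mf lk2 n0 poch_nz[OF ra] in auto)
  finally show ?thesis unfolding ps by (simp add: H2_def av k2_def x_def)
qed

lemma part2:
  fixes \<alpha> \<beta> :: complex
  assumes adm: "admissible k" and ra: "0 < Re \<alpha>" and rb: "cmod (\<beta> - \<alpha>) < Re \<alpha>"
  shows "(\<lambda>l. (\<alpha> - \<beta>) ^ l * (\<Sum>i\<le>l. \<Sum>ts\<in>tuple_families k i.
             S (l - i) (raise_index k ts) \<alpha>)) sums Z k \<alpha> \<beta>"
proof -
  define n where "n = length k"
  define g where "g = Re \<alpha> - cmod (\<alpha> - \<beta>)"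
  have g0: "0 < g" using z_bound(3)[OF ra rb] by (simp add: g_def)
  have tot: "((\<lambda>(m,c). F2 k \<alpha> \<beta> m c) has_sum Z k \<alpha> \<beta>) (SRC2 k)"
    unfolding SRC2_def Z_def
    by (rule src_total[where R="realZ k g"])
       (use perm2[OF adm ra rb] realZ_summable[OF adm g0] in \<open>simp_all add: g_def\<close>)
  have hs: "(H2 k \<alpha> \<beta> has_sum Z k \<alpha> \<beta>) (T2 k)"
    using has_sum_reindex_bij_witness[of "T2 k" "phi2 k" "psi2 k" "SRC2 k"
            "\<lambda>(m,c). F2 k \<alpha> \<beta> m c" "H2 k \<alpha> \<beta>" "Z k \<alpha> \<beta>" "Z k \<alpha> \<beta>"]
          bij2_C1[OF adm] bij2_C3[OF adm] bij2_C5[OF adm ra] tot by blast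
  define Y where "Y = (\<lambda>(j::nat \<times> (nat list list \<times> nat list)) m. case j of (i,(ts,ls)) \<Rightarrow> Z_term (map2 (+) (raise_index k ts) ls) \<alpha> \<alpha> m)"
  have gs: "(\<lambda>l. (\<alpha> - \<beta>) ^ l * (\<Sum>j\<in>J2 k l. infsum (Y j) (incr_tuples n))) sums Z k \<alpha> \<beta>"
    by (rule group_sums[OF hs[unfolded T2_def n_def[symmetric]]])
       (auto simp: J2_def H2_def Y_def)
  have "(\<Sum>j\<in>J2 k l. infsum (Y j) (incr_tuples n)) = (\<Sum>i\<le>l. \<Sum>ts\<in>tuple_families k i. S (l - i) (raise_index k ts) \<alpha>)" for l
  proof -
    have "(\<Sum>j\<in>J2 k l. infsum (Y j) (incr_tuples n)) = (\<Sum>i\<le>l. \<Sum>ts\<in>tuple_families k i. \<Sum>ls\<in>comps n (l - i). infsum (Y (i,(ts,ls))) (incr_tuples n))"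
      unfolding J2_def n_def by (simp add: sum.Sigma)
    also have "\<dots> = (\<Sum>i\<le>l. \<Sum>ts\<in>tuple_families k i. S (l - i) (raise_index k ts) \<alpha>)"
    proof (intro sum.cong refl)
      fix i ts assume ts: "ts \<in> tuple_families k i"
      have lr: "length (raise_index k ts) = n" using ts by (simp add: raise_index_def tuple_families_def n_def)
      show "(\<Sum>ls\<in>comps n (l - i). infsum (Y (i,(ts,ls))) (incr_tuples n)) = S (l - i) (raise_index k ts) \<alpha>"
        unfolding S_def lr
      proof (intro sum.cong refl)
        fix ls assume "ls \<in> comps n (l - i)"
        hence "length (map2 (+) (raise_index k ts) ls) = n" using lr by (simp add: comps_def)
        thus "infsum (Y (i,(ts,ls))) (incr_tuples n) = Z (map2 (+) (raise_index k ts) ls) \<alpha> \<alpha>"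
          by (simp add: Y_def Z_def)
      qed
    qed
    finally show ?thesis .
  qed
  thus ?thesis using gs by simp
qed


definition opos :: "nat list \<Rightarrow> nat \<Rightarrow> nat" where
  "opos js j = j + sum_list (take j js)"

lemma opos_0[simp]: "opos js 0 = 0" by (simp add: opos_def)

lemma opos_Cons_Suc: "opos (i0 # js) (Suc j) = Suc i0 + opos js j"
  by (simp add: opos_def)

lemma opos_Suc: "j < length js \<Longrightarrow> opos js (Suc j) = opos js j + Suc (js!j)"
  by (simp add: opos_def take_Suc_conv_app_nth)

lemma opos_strict: "j < j' \<Longrightarrow> j' \<le> length js \<Longrightarrow> opos js j < opos js j'"
proof (induction j' rule: less_induct)
  case (less j')
  then obtain j'' where j'': "j' = Suc j''" by (cases j') auto
  have "opos js j \<le> opos js j''"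
  proof (cases "j = j''")
    case False thus ?thesis using less j'' by (intro less_imp_le less.IH) auto
  qed simp
  also have "\<dots> < opos js j'" using less j'' by (simp add: opos_Suc)
  finally show ?case .
qed

lemma opos_inj: "j \<le> length js \<Longrightarrow> j' \<le> length js \<Longrightarrow> opos js j = opos js j' \<Longrightarrow> j = j'"
  by (metis linorder_neqE_nat opos_strict less_irrefl)

lemma opos_last: "opos js (length js) = length js + sum_list js"
  by (simp add: opos_def)

lemma insert_ones_Cons:
  assumes "k' \<noteq> []"
  shows "insert_ones (k0 # k') (i0 # js) = (k0 # replicate i0 1) @ insert_ones k' js"
  using assms by (simp add: insert_ones_def)

lemma insert_ones_single: "insert_ones [k0] [] = [k0]"
  by (simp add: insert_ones_def)

lemma insert_ones_props:
  assumes "length js = length k - 1" "k \<noteq> []"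
  shows "length (insert_ones k js) = length k + sum_list js"
    and "\<And>j. j < length k \<Longrightarrow> insert_ones k js ! opos js j = k ! j"
    and "\<And>q. q < length k + sum_list js \<Longrightarrow> q \<notin> opos js ` {..<length k} \<Longrightarrow> insert_ones k js ! q = 1"
  using assms
proof (induction k arbitrary: js)
  case Nil
  { case 1 thus ?case by simp }
  { case 2 thus ?case by simp }
  { case 3 thus ?case by simp }
next
  case (Cons k0 k')
  { case 1
    show ?case
    proof (cases "k' = []")
      case True thus ?thesis using 1 by (simp add: insert_ones_def)
    next
      case False
      then obtain i0 is' where js: "js = i0 # is'" using 1 by (cases js) auto
      have "length is' = length k' - 1" using 1 js by simp
      thus ?thesis using Cons.IH(1)[of is'] False js by (simp add: insert_ones_Cons)
    qed }
  { case (2 j)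
    show ?case
    proof (cases "k' = []")
      case True thus ?thesis using 2 by (simp add: insert_ones_def)
    next
      case False
      then obtain i0 is' where js: "js = i0 # is'" using 2 by (cases js) auto
      have l: "length is' = length k' - 1" using 2 js by simp
      show ?thesis
      proof (cases j)
        case 0 thus ?thesis using False js by (simp add: insert_ones_Cons)
      next
        case (Suc j')
        have "j' < length k'" using 2 Suc by simp
        thus ?thesis using Cons.IH(2)[OF _ l False] False js Suc
          by (simp add: insert_ones_Cons opos_Cons_Suc nth_append)
      qed
    qed }
  { case (3 q)
    show ?case
    proof (cases "k' = []")
      case True
      hence "q = 0" using 3 by simp
      hence "q \<in> opos js ` {..<length (k0 # k')}" by (auto intro: image_eqI[where x=0])
      thus ?thesis using 3 by simp
    next
      case False
      then obtain i0 is' where js: "js = i0 # is'" using 3 by (cases js) auto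
      have l: "length is' = length k' - 1" using 3 js by simp
      have q0: "q \<noteq> 0" using 3 by (auto intro: image_eqI[where x=0])
      show ?thesis
      proof (cases "q < Suc i0")
        case True
        have qi: "q - 1 < i0" using True q0 by simp
        have "((k0 # replicate i0 1) @ insert_ones k' is') ! q = replicate i0 1 ! (q - 1)"
        proof -
          obtain q'' where q'': "q = Suc q''" using q0 by (cases q) auto
          have "q'' < i0" using True q'' by simp
          thus ?thesis using q'' by (simp add: nth_append)
        qed
        thus ?thesis using False js qi by (simp add: insert_ones_Cons)
      next
        case qb: False
        define q' where "q' = q - Suc i0"
        have qq: "q = Suc i0 + q'" using qb by (simp add: q'_def)
        have q'l: "q' < length k' + sum_list is'" using 3 js qq by simp
        have q'n: "q' \<notin> opos is' ` {..<length k'}"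
        proof
          assume "q' \<in> opos is' ` {..<length k'}"
          then obtain j' where "j' < length k'" "q' = opos is' j'" by auto
          hence "q = opos js (Suc j')" "Suc j' < length (k0 # k')" using qq js by (auto simp: opos_Cons_Suc)
          thus False using 3 by blast
        qed
        have "insert_ones k' is' ! q' = 1" by (rule Cons.IH(3)[OF q'l q'n l False])
        thus ?thesis using False js qq by (simp add: insert_ones_Cons nth_append)
      qed
    qed }
qed

lemma sls_nth_card:
  fixes A :: "nat set"
  assumes "finite A" "s \<in> A"
  shows "sorted_list_of_set A ! card {u \<in> A. u < s} = s"
    and "card {u \<in> A. u < s} < card A"
proof -
  define xs where "xs = sorted_list_of_set A"
  have sx: "set xs = A" "sorted_wrt (<) xs" using assms by (auto simp: xs_def strict_sorted_list_of_set)
  obtain q where q: "q < length xs" "s = xs!q" using assms sx by (auto simp: in_set_conv_nth)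
  have c: "card {u \<in> A. u < s} = q" using card_less_nth[OF sx(2) q(1)] q sx by simp
  show "sorted_list_of_set A ! card {u \<in> A. u < s} = s" using c q by (simp add: xs_def)
  have "length xs = card A" by (simp add: xs_def)
  thus "card {u \<in> A. u < s} < card A" using c q by simp
qed

definition gapc :: "nat list \<Rightarrow> nat set \<Rightarrow> nat \<Rightarrow> nat" where
  "gapc m P j = card {t \<in> P. m!j < t \<and> t < m!(Suc j)}"

lemma gap_count:
  fixes m :: "nat list"
  assumes ms: "sorted_wrt (<) m" and mne: "m \<noteq> []" and P: "P \<subseteq> Gp m" and j: "j < length m"
  shows "card {t \<in> P. t < m!j} = (\<Sum>j'<j. gapc m P j')"
  using j
proof (induction j)
  case 0
  have "{t \<in> P. t < m!0} = {}" using P by (auto simp: Gp_def)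
  thus ?case by simp
next
  case (Suc j)
  have fP: "finite P" using P finite_Gp finite_subset by blast
  have lt: "m!j < m!Suc j" using ms Suc.prems by (simp add: sorted_wrt_iff_nth_less)
  have nm: "t \<noteq> m!j" if "t \<in> P" for t using that P Suc.prems by (auto simp: Gp_def)
  have "{t \<in> P. t < m!Suc j} = {t \<in> P. t < m!j} \<union> {t \<in> P. m!j < t \<and> t < m!(Suc j)}"
    using lt nm by (auto simp: linorder_neq_iff)
  hence "card {t \<in> P. t < m!Suc j} = card {t \<in> P. t < m!j} + card {t \<in> P. m!j < t \<and> t < m!(Suc j)}"
    using fP by (simp only:) (rule card_Un_disjoint, simp, simp, fastforce)
  thus ?case using Suc by (simp add: gapc_def)
qed

lemma gap_total:
  fixes m :: "nat list"
  assumes ms: "sorted_wrt (<) m" and mne: "m \<noteq> []" and P: "P \<subseteq> Gp m"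
  shows "card P = (\<Sum>j'<length m - 1. gapc m P j')"
proof -
  have lm: "m!(length m - 1) \<in> set m" using mne by simp
  have "t < m!(length m - 1)" if t: "t \<in> P" for t
  proof -
    have tG: "t \<in> Gp m" using t P by blast
    hence "t \<le> last m" "t \<notin> set m" unfolding Gp_def by auto
    moreover have "last m = m!(length m - 1)" using mne by (rule last_conv_nth)
    ultimately show ?thesis using lm by (metis order.not_eq_order_implies_strict)
  qed
  hence "{t \<in> P. t < m!(length m - 1)} = P" by auto
  thus ?thesis using gap_count[OF ms mne P, of "length m - 1"] mne by simp
qed

definition SRC1 :: "nat list \<Rightarrow> (nat list \<times> (nat set \<times> (nat \<Rightarrow> nat))) set" where
  "SRC1 k = Sigma (incr_tuples (length k)) fib1"

definition J1 :: "nat list \<Rightarrow> nat \<Rightarrow> (nat \<times> (nat list \<times> nat list)) set" where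
  "J1 k l = Sigma {..l} (\<lambda>i. Sigma (comps (length k - 1) i) (\<lambda>_. comps (length k + i) (l - i)))"

definition T1 :: "nat list \<Rightarrow> (nat \<times> ((nat \<times> (nat list \<times> nat list)) \<times> nat list)) set" where
  "T1 k = Sigma UNIV (\<lambda>l. Sigma (J1 k l) (\<lambda>j. incr_tuples (length k + fst j)))"

definition phi1 :: "nat list \<Rightarrow> nat list \<times> (nat set \<times> (nat \<Rightarrow> nat)) \<Rightarrow> nat \<times> ((nat \<times> (nat list \<times> nat list)) \<times> nat list)" where
  "phi1 k = (\<lambda>(m,(P,d)). (card P + (\<Sum>t\<in>set m \<union> P. d t),
     ((card P, (map (gapc m P) [0..<length k - 1], map d (sorted_list_of_set (set m \<union> P)))),
      sorted_list_of_set (set m \<union> P))))"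

definition psi1 :: "nat list \<Rightarrow> nat \<times> ((nat \<times> (nat list \<times> nat list)) \<times> nat list) \<Rightarrow> nat list \<times> (nat set \<times> (nat \<Rightarrow> nat))" where
  "psi1 k = (\<lambda>(l,((i,(js,ls)),m')). (map (\<lambda>j. m'!(opos js j)) [0..<length k],
     (set m' - set (map (\<lambda>j. m'!(opos js j)) [0..<length k]),
      restrict (\<lambda>t. ls ! card {u \<in> set m'. u < t}) (set m'))))"

lemma bij1_C3:
  assumes adm: "admissible k" and b: "b \<in> SRC1 k"
  shows "psi1 k (phi1 k b) = b" and "phi1 k b \<in> T1 k"
proof -
  obtain m P d where bv: "b = (m, (P, d))" by (cases b) auto
  have m: "m \<in> incr_tuples (length k)" and P: "P \<subseteq> Gp m" and d: "d \<in> PiE (set m \<union> P) (\<lambda>_. UNIV)"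
    using b by (auto simp: SRC1_def fib1_def bv)
  define n where "n = length k"
  have kne: "k \<noteq> []" using adm by (auto simp: admissible_def)
  hence n0: "0 < n" by (simp add: n_def)
  note mf = incr_facts[OF m[folded n_def] n0]
  define M' where "M' = set m \<union> P"
  define m' where "m' = sorted_list_of_set M'"
  define js where "js = map (gapc m P) [0..<n - 1]"
  have fP: "finite P" using P finite_Gp finite_subset by blast
  have fM: "finite M'" using fP by (simp add: M'_def)
  have disj: "set m \<inter> P = {}" using P by (auto simp: Gp_def)
  have dm: "distinct m" using mf(4) by (simp add: strict_sorted_iff)
  have cm: "card (set m) = n" using dm mf(1) by (simp add: distinct_card)
  have cM: "card M' = n + card P" using fP disj cm by (simp add: M'_def card_Un_disjoint)
  have sm': "set m' = M'" "sorted_wrt (<) m'" "length m' = card M'" using fM by (auto simp: m'_def strict_sorted_list_of_set)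
  have ph: "phi1 k b = (card P + (\<Sum>t\<in>M'. d t), ((card P, (js, map d m')), m'))"
    by (simp add: phi1_def bv M'_def m'_def js_def n_def)
  have op: "opos js j = card {u \<in> M'. u < m!j}" if j: "j < n" for j
  proof -
    have eq: "{u \<in> M'. u < m!j} = {u \<in> set m. u < m!j} \<union> {t \<in> P. t < m!j}" by (auto simp: M'_def)
    have "card {u \<in> M'. u < m!j} = card {u \<in> set m. u < m!j} + card {t \<in> P. t < m!j}"
      unfolding eq using disj fP by (intro card_Un_disjoint) auto
    also have "card {u \<in> set m. u < m!j} = j" using card_less_nth[OF mf(4)] j mf(1) by simp
    also have "card {t \<in> P. t < m!j} = (\<Sum>j'<j. gapc m P j')" using gap_count[OF mf(4) mf(2) P] j mf(1) by simp
    also have "(\<Sum>j'<j. gapc m P j') = sum_list (take j js)"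
    proof -
      have "take j js = map (gapc m P) [0..<j]" using j by (simp add: js_def take_map)
      thus ?thesis by (simp add: sum_list_sum_nth atLeast0LessThan)
    qed
    finally show ?thesis by (simp add: opos_def)
  qed
  have mm: "map (\<lambda>j. m'!(opos js j)) [0..<n] = m"
  proof (rule nth_equalityI)
    fix j assume "j < length (map (\<lambda>j. m'!(opos js j)) [0..<n])"
    hence j: "j < n" by simp
    have "m!j \<in> M'" using j mf(1) by (auto simp: M'_def)
    hence "m'!(opos js j) = m!j" using op[OF j] sls_nth_card(1)[OF fM] by (simp add: m'_def)
    thus "map (\<lambda>j. m'!(opos js j)) [0..<n] ! j = m!j" using j by simp
  qed (use mf(1) in simp)
  have PP: "set m' - set m = P" using sm'(1) disj by (auto simp: M'_def)
  have dd: "restrict (\<lambda>t. (map d m') ! card {u \<in> set m'. u < t}) (set m') = d"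
  proof (rule ext)
    fix t
    show "restrict (\<lambda>t. (map d m') ! card {u \<in> set m'. u < t}) (set m') t = d t"
    proof (cases "t \<in> M'")
      case True
      have "card {u \<in> M'. u < t} < length m'" using sls_nth_card(2)[OF fM True] sm'(3) by simp
      thus ?thesis using True sls_nth_card(1)[OF fM True] sm'(1) by (simp add: m'_def)
    next
      case False thus ?thesis using d sm'(1) by (auto simp: PiE_def extensional_def M'_def)
    qed
  qed
  have "psi1 k (phi1 k b) = (map (\<lambda>j. m'!(opos js j)) [0..<n],
      (set m' - set (map (\<lambda>j. m'!(opos js j)) [0..<n]),
       restrict (\<lambda>t. (map d m') ! card {u \<in> set m'. u < t}) (set m')))"
    unfolding ph psi1_def n_def by simp
  also have "\<dots> = b" unfolding mm PP dd bv ..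
  finally show "psi1 k (phi1 k b) = b" .
  have sd: "sum_list (map d m') = (\<Sum>t\<in>M'. d t)"
    using sm' by (simp add: sum_list_distinct_conv_sum_set strict_sorted_iff)
  have "js \<in> comps (length k - 1) (card P)"
    using gap_total[OF mf(4) mf(2) P] mf(1) by (simp add: comps_def js_def n_def sum_list_sum_nth atLeast0LessThan)
  moreover have "map d m' \<in> comps (length k + card P) (card P + (\<Sum>t\<in>M'. d t) - card P)"
    using sd sm'(3) cM by (simp add: comps_def n_def)
  moreover have "m' \<in> incr_tuples (length k + card P)"
    using sm' cM by (simp add: incr_tuples_def n_def)
  ultimately show "phi1 k b \<in> T1 k"
    unfolding ph by (simp add: T1_def J1_def)
qed


lemma opos_mono: "j \<le> j' \<Longrightarrow> j' \<le> length js \<Longrightarrow> opos js j \<le> opos js j'"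
  using opos_strict[of j j' js] by (cases "j = j'") auto

lemma T1_mem:
  assumes "(l,((i,(js,ls)),m')) \<in> T1 k"
  shows "i \<le> l" "js \<in> comps (length k - 1) i" "ls \<in> comps (length k + i) (l - i)"
        "m' \<in> incr_tuples (length k + i)"
  using assms by (auto simp: T1_def J1_def)

lemma bij1_C1:
  assumes adm: "admissible k" and a: "a \<in> T1 k"
  shows "phi1 k (psi1 k a) = a" and "psi1 k a \<in> SRC1 k"
proof -
  obtain l i js ls m' where av: "a = (l,((i,(js,ls)),m'))" by (cases a) auto
  note mem = T1_mem[OF a[unfolded av]]
  define n where "n = length k"
  define N where "N = n + i"
  have kne: "k \<noteq> []" using adm by (auto simp: admissible_def)
  hence n0: "0 < n" by (simp add: n_def)
  have ljs: "length js = n - 1" and sjs: "sum_list js = i" using mem(2) by (auto simp: comps_def n_def)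
  have lls: "length ls = N" and sls: "sum_list ls = l - i" using mem(3) by (auto simp: comps_def n_def N_def)
  have lm': "length m' = N" and sm': "sorted_wrt (<) m'" using mem(4) by (auto simp: incr_tuples_def n_def N_def)
  have dm': "distinct m'" using sm' by (simp add: strict_sorted_iff)
  define m where "m = map (\<lambda>j. m'!(opos js j)) [0..<n]"
  define P where "P = set m' - set m"
  define d where "d = restrict (\<lambda>t. ls ! card {u \<in> set m'. u < t}) (set m')"
  have ps: "psi1 k a = (m, (P, d))" by (simp add: psi1_def av m_def P_def d_def n_def)
  have oplast: "opos js (n - 1) = N - 1" using opos_last[of js] ljs sjs n0 by (simp add: N_def)
  have opN: "opos js j < N" if "j < n" for j
  proof -
    have "opos js j \<le> opos js (n-1)" using opos_mono[of j "n-1" js] that ljs by simp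
    thus ?thesis using oplast n0 by (simp add: N_def)
  qed
  have lm: "length m = n" by (simp add: m_def)
  have mj: "m!j = m'!(opos js j)" if "j < n" for j using that by (simp add: m_def)
  have msort: "sorted_wrt (<) m"
    unfolding sorted_wrt_iff_nth_less
  proof (intro allI impI)
    fix j j' assume jj: "j < j'" "j' < length m"
    have "opos js j < opos js j'" using jj lm ljs by (intro opos_strict) auto
    thus "m!j < m!j'" using jj lm mj opN sm' lm' by (simp add: sorted_wrt_iff_nth_less)
  qed
  have dm: "distinct m" using msort by (simp add: strict_sorted_iff)
  have sub: "set m \<subseteq> set m'" using opN lm' by (auto simp: m_def)
  have MM: "set m \<union> P = set m'" using sub by (auto simp: P_def)
  have m0: "m!0 = m'!0" using mj[of 0] n0 by simp
  have mne: "m \<noteq> []" using lm n0 by auto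
  have mlast: "last m = m'!(N-1)" using lm n0 mj[of "n-1"] oplast last_conv_nth[OF mne] by simp
  have PG: "P \<subseteq> Gp m"
  proof
    fix t assume t: "t \<in> P"
    then obtain q where q: "q < N" "t = m'!q" using lm' by (auto simp: P_def in_set_conv_nth)
    have "m'!0 \<le> m'!q" "m'!q \<le> m'!(N-1)" using q sm' lm' by (auto intro!: ssorted_le)
    thus "t \<in> Gp m" using t q m0 mlast by (auto simp: Gp_def P_def)
  qed
  have dP: "d \<in> PiE (set m \<union> P) (\<lambda>_. UNIV)" unfolding MM d_def by simp
  have "m \<in> incr_tuples (length k)" using lm msort by (simp add: incr_tuples_def n_def)
  thus "psi1 k a \<in> SRC1 k" unfolding ps SRC1_def fib1_def using PG dP by auto
  have sls': "sorted_list_of_set (set m \<union> P) = m'"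
    unfolding MM using sm' by (simp add: sorted_list_of_set.idem_if_sorted_distinct strict_sorted_iff)
  have cP: "card P = i"
  proof -
    have "card P = card (set m') - card (set m)" unfolding P_def by (rule card_Diff_subset) (use sub in auto)
    also have "card (set m') = N" using dm' lm' by (simp add: distinct_card)
    also have "card (set m) = n" using dm lm by (simp add: distinct_card)
    finally show ?thesis by (simp add: N_def)
  qed
  have gapeq: "gapc m P j = js!j" if j: "j < n - 1" for j
  proof -
    define a0 where "a0 = opos js j"
    define b0 where "b0 = opos js (Suc j)"
    have b0a0: "b0 = a0 + Suc (js!j)" using opos_Suc[of j js] j ljs by (simp add: a0_def b0_def)
    have b0N: "b0 < N" using opN[of "Suc j"] j by (simp add: b0_def)
    have "{t \<in> P. m!j < t \<and> t < m!(Suc j)} = (\<lambda>q. m'!q) ` {a0<..<b0}"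
    proof (intro equalityI subsetI)
      fix t assume t: "t \<in> {t \<in> P. m!j < t \<and> t < m!(Suc j)}"
      then obtain q where q: "q < N" "t = m'!q" using lm' by (auto simp: P_def in_set_conv_nth)
      have "m'!a0 < m'!q" "m'!q < m'!b0" using t q mj[of j] mj[of "Suc j"] j by (auto simp: a0_def b0_def)
      hence "a0 < q" "q < b0" using ssorted_less_iff[OF sm'] q b0N lm' b0a0 by auto
      thus "t \<in> (\<lambda>q. m'!q) ` {a0<..<b0}" using q by auto
    next
      fix t assume "t \<in> (\<lambda>q. m'!q) ` {a0<..<b0}"
      then obtain q where q: "a0 < q" "q < b0" "t = m'!q" by auto
      have qN: "q < N" using q b0N by simp
      have "t \<notin> set m"
      proof
        assume "t \<in> set m"
        then obtain j' where j': "j' < n" "t = m!j'" using lm by (auto simp: in_set_conv_nth)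
        hence "m'!q = m'!(opos js j')" using q mj by simp
        hence qo: "q = opos js j'" using ssorted_eq_iff[OF sm'] qN opN[OF j'(1)] lm' by simp
        show False
        proof (cases "j' \<le> j")
          case True
          hence "opos js j' \<le> a0" using opos_mono[of j' j js] j ljs by (simp add: a0_def)
          thus False using q qo by simp
        next
          case False
          hence "b0 \<le> opos js j'" using opos_mono[of "Suc j" j' js] j' ljs n0 by (simp add: b0_def)
          thus False using q qo by simp
        qed
      qed
      moreover have "t \<in> set m'" using q qN lm' by simp
      moreover have "m'!a0 < m'!q" "m'!q < m'!b0" using ssorted_less_iff[OF sm'] q qN b0N lm' by auto
      ultimately show "t \<in> {t \<in> P. m!j < t \<and> t < m!(Suc j)}"
        using q mj[of j] mj[of "Suc j"] j by (auto simp: P_def a0_def b0_def)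
    qed
    moreover have "inj_on (\<lambda>q. m'!q) {a0<..<b0}"
      using b0N lm' by (intro inj_onI) (auto simp: ssorted_eq_iff[OF sm'])
    ultimately have "gapc m P j = card {a0<..<b0}" by (simp add: gapc_def card_image)
    thus ?thesis using b0a0 by simp
  qed
  have gjs: "map (gapc m P) [0..<n - 1] = js"
    using gapeq ljs by (intro nth_equalityI) auto
  have dls: "map d m' = ls"
  proof (rule nth_equalityI)
    fix q assume "q < length (map d m')"
    hence q: "q < N" using lm' by simp
    have "card {u \<in> set m'. u < m'!q} = q" using card_less_nth[OF sm'] q lm' by simp
    thus "map d m' ! q = ls ! q" using q lm' by (simp add: d_def)
  qed (use lm' lls in simp)
  have sd: "(\<Sum>t\<in>set m \<union> P. d t) = l - i"
  proof -
    have "(\<Sum>t\<in>set m \<union> P. d t) = sum_list (map d m')"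
      unfolding MM using dm' by (simp add: sum_list_distinct_conv_sum_set)
    thus ?thesis using dls sls by simp
  qed
  have "phi1 k (m, (P, d)) = a"
    unfolding phi1_def av using sls' cP gjs dls sd mem(1) by (simp add: n_def)
  thus "phi1 k (psi1 k a) = a" by (simp only: ps)
qed

definition H1 :: "nat list \<Rightarrow> complex \<Rightarrow> complex \<Rightarrow> nat \<times> ((nat \<times> (nat list \<times> nat list)) \<times> nat list) \<Rightarrow> complex" where
  "H1 k \<alpha> \<beta> = (\<lambda>(l,((i,(js,ls)),m')). (\<alpha>-\<beta>) ^ l * Z_term (map2 (+) (insert_ones k js) ls) \<alpha> \<alpha> m')"

lemma bij1_C5:
  fixes \<alpha> \<beta> :: complex
  assumes adm: "admissible k" and ra: "0 < Re \<alpha>" and a: "a \<in> T1 k"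
  shows "(\<lambda>(m,y). F1 k \<alpha> \<beta> m y) (psi1 k a) = H1 k \<alpha> \<beta> a"
proof -
  obtain l i js ls m' where av: "a = (l,((i,(js,ls)),m'))" by (cases a) auto
  note mem = T1_mem[OF a[unfolded av]]
  define n where "n = length k"
  define N where "N = n + i"
  define x where "x = \<alpha> - \<beta>"
  have kne: "k \<noteq> []" using adm by (auto simp: admissible_def)
  hence n0: "0 < n" by (simp add: n_def)
  have ljs: "length js = n - 1" and sjs: "sum_list js = i" using mem(2) by (auto simp: comps_def n_def)
  have lls: "length ls = N" and sls: "sum_list ls = l - i" using mem(3) by (auto simp: comps_def n_def N_def)
  have lm': "length m' = N" and sm': "sorted_wrt (<) m'" using mem(4) by (auto simp: incr_tuples_def n_def N_def)
  have dm': "distinct m'" using sm' by (simp add: strict_sorted_iff)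
  define m where "m = map (\<lambda>j. m'!(opos js j)) [0..<n]"
  define P where "P = set m' - set m"
  define d where "d = restrict (\<lambda>t. ls ! card {u \<in> set m'. u < t}) (set m')"
  have ps: "psi1 k a = (m, (P, d))" by (simp add: psi1_def av m_def P_def d_def n_def)
  have oplast: "opos js (n - 1) = N - 1" using opos_last[of js] ljs sjs n0 by (simp add: N_def)
  have opN: "opos js j < N" if "j < n" for j
  proof -
    have "opos js j \<le> opos js (n-1)" using opos_mono[of j "n-1" js] that ljs by simp
    thus ?thesis using oplast n0 by (simp add: N_def)
  qed
  have lm: "length m = n" by (simp add: m_def)
  have mj: "m!j = m'!(opos js j)" if "j < n" for j using that by (simp add: m_def)
  have msort: "sorted_wrt (<) m"
    unfolding sorted_wrt_iff_nth_less
  proof (intro allI impI)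
    fix j j' assume jj: "j < j'" "j' < length m"
    have "opos js j < opos js j'" using jj lm ljs by (intro opos_strict) auto
    thus "m!j < m!j'" using jj lm mj opN sm' lm' by (simp add: sorted_wrt_iff_nth_less)
  qed
  have mne: "m \<noteq> []" using lm n0 by auto
  have m0: "m!0 = m'!0" using mj[of 0] n0 by simp
  have mlast: "last m = m'!(N-1)" using lm n0 mj[of "n-1"] oplast last_conv_nth[OF mne] by simp
  have m'ne: "m' \<noteq> []" using lm' n0 by (auto simp: N_def)
  have m'last: "last m' = m'!(N-1)" using last_conv_nth[OF m'ne] lm' by simp
  define Opos where "Opos = opos js ` {..<n}"
  have injop: "inj_on (opos js) {..<n}"
  proof (rule inj_onI)
    fix u v assume "u \<in> {..<n}" "v \<in> {..<n}" "opos js u = opos js v"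
    thus "u = v" using opos_inj[of u js v] ljs by simp
  qed
  have cO: "card Opos = n" using injop by (simp add: Opos_def card_image)
  have ON: "Opos \<subseteq> {..<N}" using opN by (auto simp: Opos_def)
  have injm': "inj_on (\<lambda>q. m'!q) {..<N}" using lm' by (intro inj_onI) (auto simp: ssorted_eq_iff[OF sm'])
  have setm: "set m = (\<lambda>q. m'!q) ` Opos" by (auto simp: m_def Opos_def)
  have setm': "set m' = (\<lambda>q. m'!q) ` {..<N}" using lm' by (auto simp: in_set_conv_nth)
  have PP: "P = (\<lambda>q. m'!q) ` ({..<N} - Opos)"
    unfolding P_def setm setm' by (rule inj_on_image_set_diff[OF injm' _ ON, symmetric]) simp
  have dq: "d (m'!q) = ls!q" if "q < N" for q
  proof -
    have "card {u \<in> set m'. u < m'!q} = q" using card_less_nth[OF sm'] that lm' by simp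
    thus ?thesis using that lm' by (simp add: d_def)
  qed
  define k2 where "k2 = map2 (+) (insert_ones k js) ls"
  note io = insert_ones_props[OF ljs[unfolded n_def] kne]
  have lio: "length (insert_ones k js) = N" using io(1) sjs by (simp add: N_def n_def)
  have lk2: "length k2 = N" using lio lls by (simp add: k2_def)
  have kap_O: "kap k2 (opos js j) = kap k j + ls!(opos js j)" if j: "j < n" for j
  proof -
    have e: "k2 ! (opos js j) = k!j + ls!(opos js j)" using io(2)[of j] j opN[OF j] lio lls by (simp add: k2_def n_def)
    have "opos js j = N - 1 \<longleftrightarrow> j = n - 1"
      using opos_inj[of j js "n-1"] j ljs oplast by auto
    moreover have "1 \<le> kap k j" using kap_pos[OF adm, of j] j n_def by simp
    ultimately show ?thesis using e lk2 by (auto simp: kap_def n_def)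
  qed
  have kap_R: "kap k2 q = Suc (ls!q)" if q: "q < N" "q \<notin> Opos" for q
  proof -
    have e: "k2 ! q = 1 + ls!q" using io(3)[of q] q lio lls sjs by (simp add: k2_def Opos_def n_def N_def)
    have "N - 1 \<in> Opos" using oplast n0 by (auto simp: Opos_def intro!: image_eqI[where x="n-1"])
    hence "q \<noteq> N - 1" using q by auto
    thus ?thesis using e lk2 by (simp add: kap_def)
  qed
  define z where "z q = of_nat (m'!q) + \<alpha>" for q
  define e where "e q = ls!q + (if q \<in> Opos then 0 else 1)" for q
  have p1: "(\<Prod>t\<in>set m. x ^ d t / (of_nat t + \<alpha>) ^ (kap k (idx m t) + d t))
          = (\<Prod>q\<in>Opos. x ^ e q / z q ^ kap k2 q)"
  proof -
    have "(\<Prod>t\<in>set m. x ^ d t / (of_nat t + \<alpha>) ^ (kap k (idx m t) + d t))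
        = (\<Prod>j<n. x ^ d (m!j) / (of_nat (m!j) + \<alpha>) ^ (kap k (idx m (m!j)) + d (m!j)))"
      using prod_set_nth[OF msort] lm by simp
    also have "\<dots> = (\<Prod>j<n. x ^ e (opos js j) / z (opos js j) ^ kap k2 (opos js j))"
    proof (intro prod.cong refl)
      fix j assume "j \<in> {..<n}" hence j: "j < n" by simp
      have "idx m (m!j) = j" using idx_nth[OF msort] j lm by simp
      moreover have "d (m!j) = ls!(opos js j)" using dq[OF opN[OF j]] mj[OF j] by simp
      moreover have "opos js j \<in> Opos" using j by (simp add: Opos_def)
      ultimately show "x ^ d (m!j) / (of_nat (m!j) + \<alpha>) ^ (kap k (idx m (m!j)) + d (m!j))
          = x ^ e (opos js j) / z (opos js j) ^ kap k2 (opos js j)"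
        using kap_O[OF j] mj[OF j] by (simp add: e_def z_def)
    qed
    also have "\<dots> = (\<Prod>q\<in>Opos. x ^ e q / z q ^ kap k2 q)"
      unfolding Opos_def by (rule prod.reindex[OF injop, symmetric, unfolded comp_def])
    finally show ?thesis .
  qed
  have p2: "(\<Prod>t\<in>P. x ^ Suc (d t) / (of_nat t + \<alpha>) ^ Suc (d t))
          = (\<Prod>q\<in>{..<N} - Opos. x ^ e q / z q ^ kap k2 q)"
  proof -
    have inj2: "inj_on (\<lambda>q. m'!q) ({..<N} - Opos)" using injm' by (rule inj_on_subset) auto
    have "(\<Prod>t\<in>P. x ^ Suc (d t) / (of_nat t + \<alpha>) ^ Suc (d t))
        = (\<Prod>q\<in>{..<N} - Opos. x ^ Suc (d (m'!q)) / (of_nat (m'!q) + \<alpha>) ^ Suc (d (m'!q)))"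
      unfolding PP by (rule prod.reindex[OF inj2, unfolded comp_def])
    also have "\<dots> = (\<Prod>q\<in>{..<N} - Opos. x ^ e q / z q ^ kap k2 q)"
      by (intro prod.cong refl) (auto simp: dq kap_R e_def z_def)
    finally show ?thesis .
  qed
  have pall: "(\<Prod>q\<in>Opos. x ^ e q / z q ^ kap k2 q) * (\<Prod>q\<in>{..<N} - Opos. x ^ e q / z q ^ kap k2 q)
      = x ^ l * (\<Prod>q<N. 1 / z q ^ kap k2 q)"
  proof -
    have "(\<Prod>q\<in>Opos. x ^ e q / z q ^ kap k2 q) * (\<Prod>q\<in>{..<N} - Opos. x ^ e q / z q ^ kap k2 q)
        = (\<Prod>q<N. x ^ e q / z q ^ kap k2 q)"
      using prod.subset_diff[OF ON, of "\<lambda>q. x ^ e q / z q ^ kap k2 q"] by (simp add: mult.commute)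
    also have "\<dots> = (\<Prod>q<N. x ^ e q) * (\<Prod>q<N. 1 / z q ^ kap k2 q)"
      by (simp add: prod.distrib[symmetric])
    also have "(\<Prod>q<N. x ^ e q) = x ^ (\<Sum>q<N. e q)" by (simp add: power_sum)
    also have "(\<Sum>q<N. e q) = l"
    proof -
      have "(\<Sum>q<N. e q) = (\<Sum>q<N. ls!q) + (\<Sum>q<N. if q \<in> Opos then 0 else 1)"
        by (simp add: e_def sum.distrib)
      also have "(\<Sum>q<N. ls!q) = l - i" using sls lls by (simp add: sum_list_nth_sum)
      also have "(\<Sum>q<N. (if q \<in> Opos then 0 else 1::nat)) = card ({..<N} - Opos)"
        by (simp add: sum.If_cases Int_absorb1 ON Diff_eq)
      also have "card ({..<N} - Opos) = i" using cO ON by (simp add: card_Diff_subset finite_subset N_def)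
      finally show ?thesis using mem(1) by simp
    qed
    finally show ?thesis .
  qed
  have "F1 k \<alpha> \<beta> m (P, d) = x ^ l * (Pf \<alpha> m' * (\<Prod>q<length k2. 1 / (of_nat (m'!q) + \<alpha>) ^ kap k2 q))"
  proof -
    have "Pf \<alpha> m = Pf \<alpha> m'" by (simp add: Pf_def m0 mlast m'last)
    thus ?thesis unfolding F1_def using p1 p2 pall lk2 by (simp add: x_def z_def ac_simps)
  qed
  also have "Pf \<alpha> m' * (\<Prod>q<length k2. 1 / (of_nat (m'!q) + \<alpha>) ^ kap k2 q) = Z_term k2 \<alpha> \<alpha> m'"
  proof (rule Z_term_eq[symmetric])
    show "length m' = length k2" using lm' lk2 by simp
    show "k2 \<noteq> []" using lk2 n0 by (auto simp: N_def)
    show "m'!0 \<le> last m'" using m'last sm' lm' n0 by (auto intro!: ssorted_le simp: N_def)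
    show "pochhammer \<alpha> (m'!0) \<noteq> 0" by (rule poch_nz[OF ra])
  qed
  finally show ?thesis unfolding ps by (simp add: H1_def av k2_def x_def)
qed

lemma part1:
  fixes \<alpha> \<beta> :: complex
  assumes adm: "admissible k" and ra: "0 < Re \<alpha>" and rb: "cmod (\<beta> - \<alpha>) < Re \<alpha>"
  shows "(\<lambda>l. (\<alpha> - \<beta>) ^ l * (\<Sum>i\<le>l. \<Sum>js\<in>comps (length k - 1) i.
             S (l - i) (insert_ones k js) \<alpha>)) sums Z k \<beta> \<alpha>"
proof -
  define n where "n = length k"
  define g where "g = Re \<alpha> - cmod (\<alpha> - \<beta>)"
  have g0: "0 < g" using z_bound(3)[OF ra rb] by (simp add: g_def)
  have kne: "k \<noteq> []" using adm by (auto simp: admissible_def)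
  have tot: "((\<lambda>(m,y). F1 k \<alpha> \<beta> m y) has_sum Z k \<beta> \<alpha>) (SRC1 k)"
    unfolding SRC1_def Z_def
    by (rule src_total[where R="realZ k g"])
       (use perm1[OF adm ra rb] realZ_summable[OF adm g0] in \<open>simp_all add: g_def\<close>)
  have hs: "(H1 k \<alpha> \<beta> has_sum Z k \<beta> \<alpha>) (T1 k)"
    using has_sum_reindex_bij_witness[of "T1 k" "phi1 k" "psi1 k" "SRC1 k"
            "\<lambda>(m,y). F1 k \<alpha> \<beta> m y" "H1 k \<alpha> \<beta>" "Z k \<beta> \<alpha>" "Z k \<beta> \<alpha>"]
          bij1_C1[OF adm] bij1_C3[OF adm] bij1_C5[OF adm ra] tot by blast
  define Y where "Y = (\<lambda>(j::nat \<times> (nat list \<times> nat list)) m. case j of (i,(js,ls)) \<Rightarrow> Z_term (map2 (+) (insert_ones k js) ls) \<alpha> \<alpha> m)"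
  have gs: "(\<lambda>l. (\<alpha> - \<beta>) ^ l * (\<Sum>j\<in>J1 k l. infsum (Y j) (incr_tuples (length k + fst j)))) sums Z k \<beta> \<alpha>"
    by (rule group_sums[OF hs[unfolded T1_def]])
       (auto simp: J1_def H1_def Y_def)
  have "(\<Sum>j\<in>J1 k l. infsum (Y j) (incr_tuples (length k + fst j))) = (\<Sum>i\<le>l. \<Sum>js\<in>comps (length k - 1) i. S (l - i) (insert_ones k js) \<alpha>)" for l
  proof -
    have "(\<Sum>j\<in>J1 k l. infsum (Y j) (incr_tuples (length k + fst j))) = (\<Sum>i\<le>l. \<Sum>js\<in>comps (length k - 1) i. \<Sum>ls\<in>comps (length k + i) (l - i). infsum (Y (i,(js,ls))) (incr_tuples (length k + i)))"
      unfolding J1_def by (simp add: sum.Sigma split_def)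
    also have "\<dots> = (\<Sum>i\<le>l. \<Sum>js\<in>comps (length k - 1) i. S (l - i) (insert_ones k js) \<alpha>)"
    proof (intro sum.cong refl)
      fix i js assume js: "js \<in> comps (length k - 1) i"
      have lr: "length (insert_ones k js) = length k + i"
        using insert_ones_props(1)[of js k] js kne by (simp add: comps_def)
      show "(\<Sum>ls\<in>comps (length k + i) (l - i). infsum (Y (i,(js,ls))) (incr_tuples (length k + i))) = S (l - i) (insert_ones k js) \<alpha>"
        unfolding S_def lr
      proof (intro sum.cong refl)
        fix ls assume "ls \<in> comps (length k + i) (l - i)"
        hence "length (map2 (+) (insert_ones k js) ls) = length k + i" using lr by (simp add: comps_def)
        thus "infsum (Y (i,(js,ls))) (incr_tuples (length k + i)) = Z (map2 (+) (insert_ones k js) ls) \<alpha> \<alpha>"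
          by (simp add: Y_def Z_def)
      qed
    qed
    finally show ?thesis .
  qed
  thus ?thesis using gs by simp
qed

theorem lemma2p6:
  fixes k :: "nat list" and \<alpha> \<beta> :: complex
  assumes "admissible k" and "0 < Re \<alpha>" and "cmod (\<beta> - \<alpha>) < Re \<alpha>"
  shows "((\<lambda>l. (\<alpha> - \<beta>) ^ l * (\<Sum>i\<le>l. \<Sum>is\<in>comps (length k - 1) i.
             S (l - i) (insert_ones k is) \<alpha>)) sums Z k \<beta> \<alpha>)
       \<and> ((\<lambda>l. (\<alpha> - \<beta>) ^ l * (\<Sum>i\<le>l. \<Sum>ts\<in>tuple_families k i.
             S (l - i) (raise_index k ts) \<alpha>)) sums Z k \<alpha> \<beta>)"
  using part1[OF assms] part2[OF assms] by blast


end
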